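(* There is an algorithm which, given as input an interpreted automatic structure $(\Gamma,\iota)$ describing a monoid $M$ and a word $w$ over the generators, decides whether $\sigma(w)$ is a unit of $M$ (where $\sigma$ is the interpretation consistent with $\iota$).
   Context: Let $A$ be a finite alphabet, $\$ \notin A$, and let $\delta$ send a pair of words over $A$ to the word over $(A\cup\{\$\})\times(A\cup\{\$\})$ obtained by padding the shorter word on the right with $\$$ and reading both letter by letter. A synchronous automaton recognises a relation $R$ if it accepts exactly $\delta(R)$. A pre-automatic structure $\Gamma$ consists of a finite alphabet $A$, a finite automaton recognising $L\subseteq A^*$, a synchronous automaton recognising $L_=\subseteq L\times L$, and for each $a\in A$ a synchronous automaton recognising $L_a\subseteq L\times L$. An interpretation with respect to a semigroup $S$ is a morphism $\sigma:A^*\to S$ with $\sigma(L)=S$ such that for $u,v\in L$: $(u,v)\in L_=$ iff $\sigma(u)=\sigma(v)$, and $(u,v)\in L_a$ iff $\sigma(ua)=\sigma(v)$. An assignment of generators is a function $\iota:A\to L$ for which there exists an interpretation $\sigma$ with $\sigma(a)=\sigma(\iota(a))$ for all $a\in A$ (such $\sigma$ is consistent with $\iota$). An interpreted automatic structure is a pair $(\Gamma,\iota)$, given as the automata of $\Gamma$ together with the words $\iota(a)$. A unit of a monoid $M$ with identity $1$ is an element $s$ having $t,t'\in M$ with $st=1=t's$. *)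

theory Defs
  imports "HOL-Algebra.Group" "HOL-Library.Nat_Bijection"
begin

datatype recf =
    Zr
  | Sc
  | Pj nat
  | Cn recf "recf list"
  | Pr recf recf
  | Mn recf

inductive rec_eval :: "recf \<Rightarrow> nat list \<Rightarrow> nat \<Rightarrow> bool" where
  eval_Zr: "rec_eval Zr xs 0"
| eval_Sc: "rec_eval Sc (x # xs) (Suc x)"
| eval_Pj: "i < length xs \<Longrightarrow> rec_eval (Pj i) xs (xs ! i)"
| eval_Cn: "list_all2 (\<lambda>g y. rec_eval g xs y) gs ys \<Longrightarrow> rec_eval f ys r
             \<Longrightarrow> rec_eval (Cn f gs) xs r"
| eval_Pr0: "rec_eval f xs r \<Longrightarrow> rec_eval (Pr f g) (0 # xs) r"
| eval_PrS: "rec_eval (Pr f g) (n # xs) r0 \<Longrightarrow> rec_eval g (r0 # n # xs) r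
             \<Longrightarrow> rec_eval (Pr f g) (Suc n # xs) r"
| eval_Mn: "rec_eval f (n # xs) 0 \<Longrightarrow> (\<forall>m<n. \<exists>r. rec_eval f (m # xs) r \<and> r \<noteq> 0)
             \<Longrightarrow> rec_eval (Mn f) xs n"

fun enc_list :: "nat list \<Rightarrow> nat" where
  "enc_list [] = 0"
| "enc_list (x # xs) = Suc (prod_encode (x, enc_list xs))"

definition enc_opt :: "nat option \<Rightarrow> nat" where
  "enc_opt x = (case x of None \<Rightarrow> 0 | Some a \<Rightarrow> Suc a)"

definition enc_pair_letter :: "nat option \<times> nat option \<Rightarrow> nat" where
  "enc_pair_letter p = prod_encode (enc_opt (fst p), enc_opt (snd p))"

text \<open>A (nondeterministic) finite automaton over letters of type 'l:
  a list of transitions (p, letter, q), a list of initial and a list of final states.\<close>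
type_synonym 'l nfa = "(nat \<times> 'l \<times> nat) list \<times> nat list \<times> nat list"

fun reach :: "(nat \<times> 'l \<times> nat) list \<Rightarrow> nat \<Rightarrow> 'l list \<Rightarrow> nat \<Rightarrow> bool" where
  "reach tr p [] q = (p = q)"
| "reach tr p (x # xs) q = (\<exists>p'. (p, x, p') \<in> set tr \<and> reach tr p' xs q)"

definition lang :: "'l nfa \<Rightarrow> 'l list set" where
  "lang N = (case N of (tr, ini, fin) \<Rightarrow>
     {w. \<exists>p\<in>set ini. \<exists>q\<in>set fin. reach tr p w q})"

definition nfa_letters :: "'l nfa \<Rightarrow> 'l set" where
  "nfa_letters N = (case N of (tr, ini, fin) \<Rightarrow> (\<lambda>(p, x, q). x) ` set tr)"

definition enc_nfa :: "('l \<Rightarrow> nat) \<Rightarrow> 'l nfa \<Rightarrow> nat" where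
  "enc_nfa e N = (case N of (tr, ini, fin) \<Rightarrow>
     enc_list [enc_list (map (\<lambda>(p, x, q). enc_list [p, e x, q]) tr), enc_list ini, enc_list fin])"

section \<open>Padded convolution delta of two words (None plays the role of the padding symbol)\<close>

definition pad_conv :: "nat list \<Rightarrow> nat list \<Rightarrow> (nat option \<times> nat option) list" where
  "pad_conv u v = zip (map Some u @ replicate (length v - length u) None)
                      (map Some v @ replicate (length u - length v) None)"

text \<open>The alphabet is A = {0..<k}. Input data:
  NL recognises L; Neq recognises L_=; Na ! a recognises L_a (a < k); io ! a is the word iota(a).\<close>

definition pre_automatic ::
  "nat \<Rightarrow> nat nfa \<Rightarrow> (nat option \<times> nat option) nfa \<Rightarrow> (nat option \<times> nat option) nfa list \<Rightarrow> bool" where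
  "pre_automatic k NL Neq Na \<longleftrightarrow>
     length Na = k \<and>
     nfa_letters NL \<subseteq> {0..<k} \<and>
     (\<forall>N \<in> insert Neq (set Na).
        nfa_letters N \<subseteq> (insert None (Some ` {0..<k})) \<times> (insert None (Some ` {0..<k})) \<and>
        lang N \<subseteq> {pad_conv u v | u v. u \<in> lang NL \<and> v \<in> lang NL})"

definition word_morphism :: "nat \<Rightarrow> nat monoid \<Rightarrow> (nat list \<Rightarrow> nat) \<Rightarrow> bool" where
  "word_morphism k M \<sigma> \<longleftrightarrow>
     \<sigma> [] = \<one>\<^bsub>M\<^esub> \<and>
     (\<forall>u \<in> lists {0..<k}. \<sigma> u \<in> carrier M) \<and>
     (\<forall>u \<in> lists {0..<k}. \<forall>v \<in> lists {0..<k}. \<sigma> (u @ v) = \<sigma> u \<otimes>\<^bsub>M\<^esub> \<sigma> v)"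

definition is_interpretation ::
  "nat \<Rightarrow> nat nfa \<Rightarrow> (nat option \<times> nat option) nfa \<Rightarrow> (nat option \<times> nat option) nfa list
    \<Rightarrow> nat monoid \<Rightarrow> (nat list \<Rightarrow> nat) \<Rightarrow> bool" where
  "is_interpretation k NL Neq Na M \<sigma> \<longleftrightarrow>
     word_morphism k M \<sigma> \<and>
     \<sigma> ` lang NL = carrier M \<and>
     (\<forall>u \<in> lang NL. \<forall>v \<in> lang NL. pad_conv u v \<in> lang Neq \<longleftrightarrow> \<sigma> u = \<sigma> v) \<and>
     (\<forall>a < k. \<forall>u \<in> lang NL. \<forall>v \<in> lang NL.
        pad_conv u v \<in> lang (Na ! a) \<longleftrightarrow> \<sigma> (u @ [a]) = \<sigma> v)"

definition consistent_with ::
  "nat \<Rightarrow> nat nfa \<Rightarrow> nat list list \<Rightarrow> (nat list \<Rightarrow> nat) \<Rightarrow> bool" where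
  "consistent_with k NL io \<sigma> \<longleftrightarrow>
     length io = k \<and> (\<forall>a < k. io ! a \<in> lang NL \<and> \<sigma> [a] = \<sigma> (io ! a))"

definition enc_input ::
  "nat \<Rightarrow> nat nfa \<Rightarrow> (nat option \<times> nat option) nfa \<Rightarrow> (nat option \<times> nat option) nfa list
    \<Rightarrow> nat list list \<Rightarrow> nat list \<Rightarrow> nat" where
  "enc_input k NL Neq Na io w =
     enc_list [k, enc_nfa id NL, enc_nfa enc_pair_letter Neq,
               enc_list (map (enc_nfa enc_pair_letter) Na),
               enc_list (map enc_list io), enc_list w]"

end

theory Submission
  imports Defs
begin



section \<open>Basic recursive programs\<close>

fun constrec :: "nat \<Rightarrow> recf" where
  "constrec 0 = Zr" | "constrec (Suc n) = Cn Sc [constrec n]"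

lemma eval_Cn1: "rec_eval g xs y \<Longrightarrow> rec_eval f [y] r \<Longrightarrow> rec_eval (Cn f [g]) xs r"
  by (rule eval_Cn[where ys="[y]"]) auto

lemma eval_Cn2: "rec_eval g1 xs y1 \<Longrightarrow> rec_eval g2 xs y2 \<Longrightarrow> rec_eval f [y1, y2] r
   \<Longrightarrow> rec_eval (Cn f [g1, g2]) xs r"
  by (rule eval_Cn[where ys="[y1, y2]"]) auto

lemma eval_Cn3: "rec_eval g1 xs y1 \<Longrightarrow> rec_eval g2 xs y2 \<Longrightarrow> rec_eval g3 xs y3
   \<Longrightarrow> rec_eval f [y1, y2, y3] r \<Longrightarrow> rec_eval (Cn f [g1, g2, g3]) xs r"
  by (rule eval_Cn[where ys="[y1, y2, y3]"]) auto

lemma eval_Pj': "i < length xs \<Longrightarrow> y = xs ! i \<Longrightarrow> rec_eval (Pj i) xs y"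
  using eval_Pj by blast

lemma eval_Sc': "rec_eval Sc [x] (Suc x)"
  using eval_Sc by blast

lemma eval_const: "rec_eval (constrec n) xs n"
proof (induction n)
  case 0 then show ?case by (simp add: eval_Zr)
next
  case (Suc n) then show ?case by (simp add: eval_Cn1 eval_Sc')
qed

definition "c_add = Pr (Pj 0) (Cn Sc [Pj 0])"

lemma eval_add: "rec_eval c_add [x, y] (x + y)"
proof (induction x)
  case 0 then show ?case unfolding c_add_def by (auto intro!: eval_Pr0 eval_Pj')
next
  case (Suc x)
  show ?case unfolding c_add_def
    by (rule eval_PrS[OF Suc[unfolded c_add_def]]) (auto intro!: eval_Cn1 eval_Pj' eval_Sc')
qed

lemma eval_addI: "r = x + y \<Longrightarrow> rec_eval c_add [x, y] r"
  using eval_add by simp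

definition "c_mul = Pr Zr (Cn c_add [Pj 0, Pj 2])"

lemma eval_mul: "rec_eval c_mul [x, y] (x * y)"
proof (induction x)
  case 0 then show ?case unfolding c_mul_def by (auto intro!: eval_Pr0 eval_Zr)
next
  case (Suc x)
  show ?case unfolding c_mul_def
    by (rule eval_PrS[OF Suc[unfolded c_mul_def]])
       (auto intro!: eval_Cn2 eval_Pj' eval_addI)
qed

definition "c_pred = Pr Zr (Pj 1)"

lemma eval_pred: "rec_eval c_pred [x] (x - 1)"
proof (induction x)
  case 0 then show ?case unfolding c_pred_def by (auto intro!: eval_Pr0 eval_Zr)
next
  case (Suc n)
  show ?case unfolding c_pred_def
    by (rule eval_PrS[OF Suc[unfolded c_pred_def]]) (auto intro!: eval_Pj')
qed

lemma eval_predI: "r = x - 1 \<Longrightarrow> rec_eval c_pred [x] r"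
  using eval_pred by simp

definition "c_sub' = Pr (Pj 0) (Cn c_pred [Pj 0])"

lemma eval_sub': "rec_eval c_sub' [y, x] (x - y)"
proof (induction y)
  case 0 then show ?case unfolding c_sub'_def by (auto intro!: eval_Pr0 eval_Pj')
next
  case (Suc y)
  have "x - Suc y = (x - y) - 1" by simp
  then show ?case unfolding c_sub'_def
    by (intro eval_PrS[OF Suc[unfolded c_sub'_def]]) (auto intro!: eval_Cn1 eval_Pj' eval_predI)
qed

definition "c_sub = Cn c_sub' [Pj 1, Pj 0]"

lemma eval_sub: "rec_eval c_sub [x, y] (x - y)"
  unfolding c_sub_def by (auto intro!: eval_Cn2 eval_Pj' eval_sub')

lemma eval_subI: "r = x - y \<Longrightarrow> rec_eval c_sub [x, y] r"
  using eval_sub by simp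

definition "c_tri = Pr Zr (Cn c_add [Pj 0, Cn Sc [Pj 1]])"

lemma eval_tri: "rec_eval c_tri [n] (triangle n)"
proof (induction n)
  case 0 then show ?case unfolding c_tri_def by (auto intro!: eval_Pr0 eval_Zr)
next
  case (Suc n)
  show ?case unfolding c_tri_def
    by (rule eval_PrS[OF Suc[unfolded c_tri_def]])
       (auto intro!: eval_Cn2 eval_Cn1 eval_Pj' eval_Sc' eval_addI)
qed

definition pe :: "nat \<Rightarrow> nat \<Rightarrow> nat" where "pe a b = prod_encode (a, b)"
definition p1 :: "nat \<Rightarrow> nat" where "p1 p = fst (prod_decode p)"
definition p2 :: "nat \<Rightarrow> nat" where "p2 p = snd (prod_decode p)"

lemma p1_pe[simp]: "p1 (pe a b) = a" and p2_pe[simp]: "p2 (pe a b) = b"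
  by (simp_all add: p1_def p2_def pe_def)

lemma pe_p12[simp]: "pe (p1 p) (p2 p) = p"
  by (simp add: p1_def p2_def pe_def)

lemma pe_inj[simp]: "pe a b = pe c d \<longleftrightarrow> a = c \<and> b = d"
  by (simp add: pe_def)

lemma pe_ge1: "a \<le> pe a b" and pe_ge2: "b \<le> pe a b"
  by (simp_all add: pe_def le_prod_encode_1 le_prod_encode_2)

lemma pe_mono: "a \<le> a' \<Longrightarrow> b \<le> b' \<Longrightarrow> pe a b \<le> pe a' b'"
proof -
  assume "a \<le> a'" "b \<le> b'"
  have "triangle (a + b) \<le> triangle (a' + b')"
    unfolding triangle_def using \<open>a \<le> a'\<close> \<open>b \<le> b'\<close>
    by (intro div_le_mono mult_le_mono) auto
  then show ?thesis using \<open>a \<le> a'\<close> by (simp add: pe_def prod_encode_def)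
qed

definition "c_pe = Cn c_add [Cn c_tri [c_add], Pj 0]"

lemma eval_pe: "rec_eval c_pe [a, b] (pe a b)"
  unfolding c_pe_def pe_def prod_encode_def
  by (auto intro!: eval_Cn2 eval_Cn1 eval_Pj' eval_add eval_tri)

definition "c_s = Mn (Cn c_sub [Cn Sc [Pj 1], Cn c_tri [Cn Sc [Pj 0]]])"

lemma eval_s: "rec_eval c_s [p] (LEAST s. p < triangle (Suc s))"
proof -
  let ?F = "Cn c_sub [Cn Sc [Pj 1], Cn c_tri [Cn Sc [Pj 0]]]"
  have F: "rec_eval ?F [s, p] (Suc p - triangle (Suc s))" for s
  proof -
    have a: "rec_eval (Cn Sc [Pj 1]) [s, p] (Suc p)"
      by (rule eval_Cn1[OF _ eval_Sc'], rule eval_Pj') auto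
    have b: "rec_eval (Cn c_tri [Cn Sc [Pj 0]]) [s, p] (triangle (Suc s))"
      by (rule eval_Cn1[OF _ eval_tri], rule eval_Cn1[OF _ eval_Sc'], rule eval_Pj') auto
    show ?thesis by (rule eval_Cn2[OF a b eval_sub])
  qed
  have ex: "p < triangle (Suc p)" by (induction p) auto
  let ?s = "LEAST s. p < triangle (Suc s)"
  have "p < triangle (Suc ?s)" using ex by (rule LeastI)
  then have "Suc p - triangle (Suc ?s) = 0" by simp
  moreover have "\<forall>m<?s. \<exists>r. rec_eval ?F [m, p] r \<and> r \<noteq> 0"
  proof (intro allI impI)
    fix m assume "m < ?s"
    then have "\<not> p < triangle (Suc m)" using not_less_Least by blast
    then show "\<exists>r. rec_eval ?F [m, p] r \<and> r \<noteq> 0" using F[of m] by (intro exI[of _ "Suc p - triangle (Suc m)"]) auto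
  qed
  ultimately show ?thesis unfolding c_s_def using F[of ?s] by (intro eval_Mn) auto
qed

lemma decode_via_s:
  fixes p :: nat
  defines "s \<equiv> LEAST s. p < triangle (Suc s)"
  shows "p1 p = p - triangle s" "p2 p = s - (p - triangle s)"
proof -
  have ex: "p < triangle (Suc p)" by (induction p) auto
  have lt: "p < triangle (Suc s)" unfolding s_def using ex by (rule LeastI)
  have ge: "triangle s \<le> p"
  proof (cases s)
    case 0 then show ?thesis by simp
  next
    case (Suc t)
    then have "t < s" by simp
    then have "\<not> p < triangle (Suc t)" unfolding s_def using not_less_Least by blast
    then show ?thesis using Suc by simp
  qed
  define m where "m = p - triangle s"
  have pm: "p = triangle s + m" and ms: "m \<le> s" using ge lt by (auto simp: m_def)
  have "prod_decode p = (m, s - m)"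
    using ms by (simp add: pm prod_decode_triangle_add prod_decode_aux.simps)
  then show "p1 p = p - triangle s" "p2 p = s - (p - triangle s)"
    by (simp_all add: p1_def p2_def m_def)
qed

definition "c_p1 = Cn c_sub [Pj 0, Cn c_tri [c_s]]"
definition "c_p2 = Cn c_sub [c_s, c_p1]"

lemma eval_p1: "rec_eval c_p1 [p] (p1 p)"
  unfolding c_p1_def decode_via_s
  by (auto intro!: eval_Cn2 eval_Cn1 eval_Pj' eval_sub eval_tri eval_s)

lemma eval_p2: "rec_eval c_p2 [p] (p2 p)"
  unfolding c_p2_def decode_via_s(2)
  using eval_p1[of p] unfolding decode_via_s(1)
  by (auto intro!: eval_Cn2 eval_sub eval_s)

section \<open>Computability framework\<close>

definition compD :: "nat set \<Rightarrow> (nat \<Rightarrow> nat) \<Rightarrow> bool" where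
  "compD D f \<longleftrightarrow> (\<exists>c. \<forall>x\<in>D. rec_eval c [x] (f x))"

lemma compD_mono: "compD UNIV f \<Longrightarrow> compD D f"
  unfolding compD_def by blast

lemma cd_const[intro]: "compD D (\<lambda>x. c)"
  unfolding compD_def using eval_const by blast

lemma cd_id[intro]: "compD D (\<lambda>x. x)"
  unfolding compD_def by (auto intro!: exI[of _ "Pj 0"] eval_Pj')

lemma cd_un: assumes "\<And>a. rec_eval c [a] (h a)" "compD D f"
  shows "compD D (\<lambda>x. h (f x))"
proof -
  obtain cf where "\<forall>x\<in>D. rec_eval cf [x] (f x)" using assms(2) unfolding compD_def by blast
  then show ?thesis unfolding compD_def using assms(1)
    by (intro exI[of _ "Cn c [cf]"]) (auto intro: eval_Cn1)
qed

lemma cd_bin: assumes "\<And>a b. rec_eval c [a, b] (h a b)" "compD D f" "compD D g"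
  shows "compD D (\<lambda>x. h (f x) (g x))"
proof -
  obtain cf where "\<forall>x\<in>D. rec_eval cf [x] (f x)" using assms(2) unfolding compD_def by blast
  moreover obtain cg where "\<forall>x\<in>D. rec_eval cg [x] (g x)" using assms(3) unfolding compD_def by blast
  ultimately show ?thesis unfolding compD_def using assms(1)
    by (intro exI[of _ "Cn c [cf, cg]"]) (auto intro: eval_Cn2)
qed

lemma cd_compose: assumes "compD E f" "compD D g" "\<And>x. x \<in> D \<Longrightarrow> g x \<in> E"
  shows "compD D (\<lambda>x. f (g x))"
proof -
  obtain cf where "\<forall>x\<in>E. rec_eval cf [x] (f x)" using assms(1) unfolding compD_def by blast
  moreover obtain cg where "\<forall>x\<in>D. rec_eval cg [x] (g x)" using assms(2) unfolding compD_def by blast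
  ultimately show ?thesis unfolding compD_def using assms(3)
    by (intro exI[of _ "Cn cf [cg]"]) (auto intro: eval_Cn1)
qed

lemma cd_add[intro]: "compD D f \<Longrightarrow> compD D g \<Longrightarrow> compD D (\<lambda>x. f x + g x)"
  by (rule cd_bin[OF eval_add])
lemma cd_mul[intro]: "compD D f \<Longrightarrow> compD D g \<Longrightarrow> compD D (\<lambda>x. f x * g x)"
  by (rule cd_bin[OF eval_mul])
lemma cd_sub[intro]: "compD D f \<Longrightarrow> compD D g \<Longrightarrow> compD D (\<lambda>x. f x - g x)"
  by (rule cd_bin[OF eval_sub])
lemma cd_pe[intro]: "compD D f \<Longrightarrow> compD D g \<Longrightarrow> compD D (\<lambda>x. pe (f x) (g x))"
  by (rule cd_bin[OF eval_pe])
lemma cd_Suc[intro]: "compD D f \<Longrightarrow> compD D (\<lambda>x. Suc (f x))"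
  by (rule cd_un[OF eval_Sc'])
lemma cd_p1[intro]: "compD D f \<Longrightarrow> compD D (\<lambda>x. p1 (f x))"
  by (rule cd_un[OF eval_p1])
lemma cd_p2[intro]: "compD D f \<Longrightarrow> compD D (\<lambda>x. p2 (f x))"
  by (rule cd_un[OF eval_p2])

primrec primr :: "nat \<Rightarrow> (nat \<Rightarrow> nat \<Rightarrow> nat) \<Rightarrow> nat \<Rightarrow> nat" where
  "primr a h 0 = a"
| "primr a h (Suc i) = h i (primr a h i)"

lemma cd_prim[intro]:
  assumes "compD UNIV a" "compD UNIV (\<lambda>q. h (p1 q) (p1 (p2 q)) (p2 (p2 q)))" "compD D n"
  shows "compD D (\<lambda>x. primr (a x) (h x) (n x))"
proof -
  obtain ca where ca: "\<And>x. rec_eval ca [x] (a x)" using assms(1) unfolding compD_def by blast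
  obtain ch where ch: "\<And>q. rec_eval ch [q] (h (p1 q) (p1 (p2 q)) (p2 (p2 q)))"
    using assms(2) unfolding compD_def by blast
  obtain cn where cn: "\<forall>x\<in>D. rec_eval cn [x] (n x)" using assms(3) unfolding compD_def by blast
  define G where "G = Pr ca (Cn ch [Cn c_pe [Pj 2, Cn c_pe [Pj 1, Pj 0]]])"
  have G: "rec_eval G [i, x] (primr (a x) (h x) i)" for i x
  proof (induction i)
    case 0 then show ?case unfolding G_def by (auto intro!: eval_Pr0 ca)
  next
    case (Suc i)
    have step: "rec_eval (Cn ch [Cn c_pe [Pj 2, Cn c_pe [Pj 1, Pj 0]]]) [primr (a x) (h x) i, i, x]
           (h x i (primr (a x) (h x) i))"
      using ch[of "pe x (pe i (primr (a x) (h x) i))"]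
      by (auto intro!: eval_Cn1 eval_Cn2 eval_Pj' eval_pe)
    show ?case unfolding G_def
      by (simp only: primr.simps) (rule eval_PrS[OF Suc[unfolded G_def] step])
  qed
  show ?thesis unfolding compD_def
    by (rule exI[of _ "Cn G [cn, Pj 0]"]) (auto intro!: eval_Cn2 eval_Pj' G cn[rule_format])
qed

lemma cd_least_raw:
  assumes "compD UNIV (\<lambda>q. of_bool (P (p1 q) (p2 q)))" "\<And>x. x \<in> D \<Longrightarrow> \<exists>i. P x i"
  shows "compD D (\<lambda>x. LEAST i. P x i)"
proof -
  obtain cP where cP: "\<And>q. rec_eval cP [q] (of_bool (P (p1 q) (p2 q)))"
    using assms(1) unfolding compD_def by blast
  define F where "F = Cn c_sub [constrec 1, Cn cP [Cn c_pe [Pj 1, Pj 0]]]"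
  have F: "rec_eval F [i, x] (1 - of_bool (P x i))" for i x
  proof -
    have a: "rec_eval (Cn c_pe [Pj 1, Pj 0]) [i, x] (pe x i)"
      by (rule eval_Cn2[OF _ _ eval_pe]; rule eval_Pj') auto
    have b: "rec_eval (Cn cP [Cn c_pe [Pj 1, Pj 0]]) [i, x] (of_bool (P x i))"
      using eval_Cn1[OF a cP[of "pe x i"]] by simp
    show ?thesis unfolding F_def by (rule eval_Cn2[OF eval_const b eval_sub])
  qed
  show ?thesis unfolding compD_def
  proof (intro exI[of _ "Mn F"] ballI)
    fix x assume "x \<in> D"
    then obtain i where "P x i" using assms(2) by blast
    then have Pl: "P x (LEAST i. P x i)" by (rule LeastI)
    show "rec_eval (Mn F) [x] (LEAST i. P x i)"
    proof (rule eval_Mn)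
      show "rec_eval F [LEAST i. P x i, x] 0" using F[of "LEAST i. P x i" x] Pl by simp
      show "\<forall>m<LEAST i. P x i. \<exists>r. rec_eval F [m, x] r \<and> r \<noteq> 0"
        using F not_less_Least by fastforce
    qed
  qed
qed

lemma cd_least_g:
  assumes "compD UNIV (\<lambda>q. of_bool (P (p1 q) (p2 q)))" "compD D g" "\<And>x. x \<in> D \<Longrightarrow> \<exists>i. P (g x) i"
  shows "compD D (\<lambda>x. LEAST i. P (g x) i)"
  by (rule cd_compose[OF cd_least_raw[OF assms(1), of "g ` D"] assms(2)]) (use assms(3) in auto)

lemma cd_app2:
  assumes "compD UNIV (\<lambda>q. F (p1 q) (p2 q))" "compD D a" "compD D b"
  shows "compD D (\<lambda>x. F (a x) (b x))"
  using cd_compose[OF assms(1) cd_pe[OF assms(2,3)]] by simp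

lemma cd_if[intro]: assumes "compD D (\<lambda>x. of_bool (P x))" "compD D f" "compD D g"
  shows "compD D (\<lambda>x. if P x then f x else g x)"
proof -
  have "compD D (\<lambda>x. of_bool (P x) * f x + (1 - of_bool (P x)) * g x)"
    by (intro cd_add cd_mul cd_sub cd_const assms)
  moreover have "(\<lambda>x. of_bool (P x) * f x + (1 - of_bool (P x)) * g x) = (\<lambda>x. if P x then f x else g x)"
    by auto
  ultimately show ?thesis by simp
qed

lemma cd_eq[intro]: assumes "compD D f" "compD D g" shows "compD D (\<lambda>x. of_bool (f x = g x))"
proof -
  have "compD D (\<lambda>x. 1 - ((f x - g x) + (g x - f x)))" by (intro cd_add cd_mul cd_sub cd_Suc cd_const assms)
  moreover have "(\<lambda>x. 1 - ((f x - g x) + (g x - f x))) = (\<lambda>x. of_bool (f x = g x))" by auto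
  ultimately show ?thesis by simp
qed

lemma cd_le[intro]: assumes "compD D f" "compD D g" shows "compD D (\<lambda>x. of_bool (f x \<le> g x))"
proof -
  have "compD D (\<lambda>x. 1 - (f x - g x))" by (intro cd_add cd_mul cd_sub cd_Suc cd_const assms)
  moreover have "(\<lambda>x. 1 - (f x - g x)) = (\<lambda>x. of_bool (f x \<le> g x))" by auto
  ultimately show ?thesis by simp
qed

lemma cd_less[intro]: assumes "compD D f" "compD D g" shows "compD D (\<lambda>x. of_bool (f x < g x))"
proof -
  have "compD D (\<lambda>x. 1 - (Suc (f x) - g x))" by (intro cd_add cd_mul cd_sub cd_Suc cd_const assms)
  moreover have "(\<lambda>x. 1 - (Suc (f x) - g x)) = (\<lambda>x. of_bool (f x < g x))" by auto
  ultimately show ?thesis by simp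
qed

lemma cd_not[intro]: assumes "compD D (\<lambda>x. of_bool (P x))" shows "compD D (\<lambda>x. of_bool (\<not> P x))"
proof -
  have "compD D (\<lambda>x. 1 - of_bool (P x))" by (intro cd_add cd_mul cd_sub cd_Suc cd_const assms)
  moreover have "(\<lambda>x. 1 - of_bool (P x)) = (\<lambda>x. of_bool (\<not> P x) :: nat)" by auto
  ultimately show ?thesis by simp
qed

lemma cd_conj[intro]: assumes "compD D (\<lambda>x. of_bool (P x))" "compD D (\<lambda>x. of_bool (Q x))"
  shows "compD D (\<lambda>x. of_bool (P x \<and> Q x))"
proof -
  have "compD D (\<lambda>x. of_bool (P x) * of_bool (Q x))" by (intro cd_add cd_mul cd_sub cd_Suc cd_const assms)
  moreover have "(\<lambda>x. of_bool (P x) * of_bool (Q x)) = (\<lambda>x. of_bool (P x \<and> Q x) :: nat)" by auto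
  ultimately show ?thesis by simp
qed

lemma cd_disj[intro]: assumes "compD D (\<lambda>x. of_bool (P x))" "compD D (\<lambda>x. of_bool (Q x))"
  shows "compD D (\<lambda>x. of_bool (P x \<or> Q x))"
proof -
  have "compD D (\<lambda>x. of_bool (\<not> (\<not> P x \<and> \<not> Q x)))" by (intro cd_conj cd_not assms)
  then show ?thesis by simp
qed

lemma cd_imp[intro]: assumes "compD D (\<lambda>x. of_bool (P x))" "compD D (\<lambda>x. of_bool (Q x))"
  shows "compD D (\<lambda>x. of_bool (P x \<longrightarrow> Q x))"
proof -
  have "compD D (\<lambda>x. of_bool (\<not> P x \<or> Q x))" by (intro cd_disj cd_not assms)
  then show ?thesis by simp
qed

lemma primr_sum: "primr 0 (\<lambda>i acc. acc + f i) n = (\<Sum>i<n. f i)"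
  by (induction n) auto

lemma primr_prod: "primr (Suc 0) (\<lambda>i acc. acc * f i) n = (\<Prod>i<n. f i)"
  by (induction n) auto

lemma cd_sum[intro]: assumes "compD UNIV (\<lambda>q. f (p1 q) (p2 q))" "compD D n"
  shows "compD D (\<lambda>x. \<Sum>i<n x. f x i)"
proof -
  have h: "compD UNIV (\<lambda>q. p2 (p2 q) + f (p1 q) (p1 (p2 q)))"
    by (intro cd_add cd_p2 cd_id cd_app2[OF assms(1)] cd_p1)
  have "compD D (\<lambda>x. primr 0 (\<lambda>i acc. acc + f x i) (n x))"
    using cd_prim[where h="\<lambda>x i acc. acc + f x i", OF cd_const h assms(2)] by simp
  then show ?thesis by (simp add: primr_sum)
qed

lemma cd_prod[intro]: assumes "compD UNIV (\<lambda>q. f (p1 q) (p2 q))" "compD D n"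
  shows "compD D (\<lambda>x. \<Prod>i<n x. f x i)"
proof -
  have h: "compD UNIV (\<lambda>q. p2 (p2 q) * f (p1 q) (p1 (p2 q)))"
    by (intro cd_mul cd_p2 cd_id cd_app2[OF assms(1)] cd_p1)
  have "compD D (\<lambda>x. primr (Suc 0) (\<lambda>i acc. acc * f x i) (n x))"
    using cd_prim[where h="\<lambda>x i acc. acc * f x i", OF cd_const h assms(2)] by simp
  then show ?thesis by (simp add: primr_prod)
qed

lemma cd_bex[intro]: assumes "compD UNIV (\<lambda>q. of_bool (P (p1 q) (p2 q)))" "compD D n"
  shows "compD D (\<lambda>x. of_bool (\<exists>i<n x. P x i))"
proof -
  have "compD D (\<lambda>x. of_bool ((\<Sum>i<n x. of_bool (P x i)) \<noteq> (0::nat)))"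
    using cd_sum[where f="\<lambda>x i. of_bool (P x i)", OF assms] by (intro cd_not cd_eq cd_const)
  moreover have "((\<Sum>i<n. of_bool (P x i)) \<noteq> (0::nat)) = (\<exists>i<n. P x i)" for x n by auto
  ultimately show ?thesis by simp
qed

lemma cd_ball[intro]: assumes "compD UNIV (\<lambda>q. of_bool (P (p1 q) (p2 q)))" "compD D n"
  shows "compD D (\<lambda>x. of_bool (\<forall>i<n x. P x i))"
proof -
  have "compD D (\<lambda>x. of_bool (\<not> (\<exists>i<n x. \<not> P x i)))"
    using assms by (intro cd_not cd_bex) auto
  then show ?thesis by simp
qed




lemmas cd_rules = cd_const cd_id cd_add cd_mul cd_sub cd_pe cd_Suc cd_p1 cd_p2 cd_prim cd_if cd_eq cd_le
  cd_less cd_not cd_conj cd_disj cd_imp cd_sum cd_prod cd_bex cd_ball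

section \<open>List codes\<close>

definition hdc :: "nat \<Rightarrow> nat" where "hdc c = p1 (c - 1)"
definition tlc :: "nat \<Rightarrow> nat" where "tlc c = p2 (c - 1)"
definition dropc :: "nat \<Rightarrow> nat \<Rightarrow> nat" where "dropc i c = primr c (\<lambda>_ acc. tlc acc) i"
definition nthc :: "nat \<Rightarrow> nat \<Rightarrow> nat" where "nthc c i = hdc (dropc i c)"
definition lenc :: "nat \<Rightarrow> nat" where "lenc c = (\<Sum>j<c. of_bool (dropc j c \<noteq> 0))"
definition lb :: "nat \<Rightarrow> nat \<Rightarrow> nat" where "lb L S = primr 0 (\<lambda>_ acc. Suc (pe S acc)) L"

lemma cd_hdc[intro]: "compD D f \<Longrightarrow> compD D (\<lambda>x. hdc (f x))"
  unfolding hdc_def by (intro cd_rules)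
lemma cd_tlc[intro]: "compD D f \<Longrightarrow> compD D (\<lambda>x. tlc (f x))"
  unfolding tlc_def by (intro cd_rules)

lemma cd_dropc[intro]: "compD D f \<Longrightarrow> compD D g \<Longrightarrow> compD D (\<lambda>x. dropc (f x) (g x))"
proof -
  assume a: "compD D f" "compD D g"
  have "compD UNIV (\<lambda>q. primr (p2 q) (\<lambda>_ acc. tlc acc) (p1 q))"
    using cd_prim[where a=p2 and h="\<lambda>q _ acc. tlc acc" and n=p1] by (force intro: cd_rules cd_tlc)
  then have "compD UNIV (\<lambda>q. dropc (p1 q) (p2 q))" unfolding dropc_def .
  then show ?thesis using cd_app2 a by blast
qed

lemma cd_nthc[intro]: "compD D f \<Longrightarrow> compD D g \<Longrightarrow> compD D (\<lambda>x. nthc (f x) (g x))"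
  unfolding nthc_def by (intro cd_hdc cd_dropc)

lemma cd_lenc[intro]: "compD D f \<Longrightarrow> compD D (\<lambda>x. lenc (f x))"
proof -
  assume a: "compD D f"
  have "compD UNIV (\<lambda>c. \<Sum>j<c. of_bool (dropc j c \<noteq> 0))"
    by (intro cd_rules cd_dropc)
  then have "compD UNIV lenc" unfolding lenc_def by simp
  then show ?thesis using cd_compose[OF _ a] by blast
qed

lemma cd_lb[intro]: "compD D f \<Longrightarrow> compD D g \<Longrightarrow> compD D (\<lambda>x. lb (f x) (g x))"
proof -
  assume a: "compD D f" "compD D g"
  have "compD UNIV (\<lambda>q. primr 0 (\<lambda>_ acc. Suc (pe (p2 q) acc)) (p1 q))"
    using cd_prim[where a="\<lambda>_. 0" and h="\<lambda>q _ acc. Suc (pe (p2 q) acc)" and n=p1]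
    by (force intro: cd_rules)
  then have "compD UNIV (\<lambda>q. lb (p1 q) (p2 q))" unfolding lb_def .
  then show ?thesis using cd_app2 a by blast
qed

lemma enc_list_Cons[simp]: "enc_list (x # xs) = Suc (pe x (enc_list xs))"
  by (simp add: pe_def)

declare enc_list.simps(2)[simp del]

lemma prod_decode_0: "prod_decode 0 = (0, 0)"
  using prod_encode_inverse[of "(0,0)"] by (simp add: prod_encode_def)

lemma p2_0[simp]: "p2 0 = 0"
  by (simp add: p2_def prod_decode_0)

lemma hdc_Suc[simp]: "hdc (Suc q) = p1 q" by (simp add: hdc_def)
lemma tlc_Suc[simp]: "tlc (Suc q) = p2 q" by (simp add: tlc_def)
lemma tlc_0[simp]: "tlc 0 = 0" by (simp add: tlc_def)

lemma hdc_enc[simp]: "hdc (enc_list (x # xs)) = x"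
  by (simp add: hdc_def enc_list_Cons)

lemma tlc_enc[simp]: "tlc (enc_list xs) = enc_list (tl xs)"
  by (cases xs) auto

lemma dropc_enc[simp]: "dropc i (enc_list xs) = enc_list (drop i xs)"
  by (induction i) (auto simp: dropc_def drop_Suc drop_tl)

lemma enc_list_0_iff[simp]: "enc_list xs = 0 \<longleftrightarrow> xs = []"
  by (cases xs) auto

lemma nthc_enc[simp]: "i < length xs \<Longrightarrow> nthc (enc_list xs) i = xs ! i"
  by (simp add: nthc_def Cons_nth_drop_Suc[symmetric])

lemma length_le_enc: "length xs \<le> enc_list xs"
proof (induction xs)
  case (Cons x xs)
  then show ?case using pe_ge2[of "enc_list xs" x] by simp
qed simp

lemma set_lt_enc: "x \<in> set xs \<Longrightarrow> x < enc_list xs"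
proof (induction xs)
  case (Cons y ys)
  then show ?case using pe_ge1[of y "enc_list ys"] pe_ge2[of "enc_list ys" y]
    by fastforce
qed simp

lemma lenc_enc[simp]: "lenc (enc_list xs) = length xs"
proof -
  have "lenc (enc_list xs) = (\<Sum>j<enc_list xs. of_bool (j < length xs))"
    unfolding lenc_def by (intro sum.cong) auto
  also have "\<dots> = card {j. j < enc_list xs \<and> j < length xs}"
    by (simp add: sum.If_cases Int_def)
  also have "{j. j < enc_list xs \<and> j < length xs} = {..<length xs}"
    using length_le_enc[of xs] by auto
  finally show ?thesis by simp
qed

lemma enc_list_inj[simp]: "enc_list xs = enc_list ys \<longleftrightarrow> xs = ys"
proof (induction xs arbitrary: ys)
  case Nil then show ?case by (cases ys) auto
next
  case (Cons x xs) then show ?case by (cases ys) auto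
qed

lemma p2_lt: "c \<noteq> 0 \<Longrightarrow> p2 (c - 1) < c"
  using pe_ge2[of "p2 (c - 1)" "p1 (c - 1)"] by simp

lemma p2_lt': "0 < c \<Longrightarrow> p2 (c - Suc 0) < c"
  using p2_lt by simp

function dec :: "nat \<Rightarrow> nat list" where
  "dec c = (if c = 0 then [] else hdc c # dec (tlc c))"
  by auto
termination
  by (relation "measure id") (auto simp: tlc_def p2_lt')

declare dec.simps[simp del]

lemma enc_dec[simp]: "enc_list (dec c) = c"
proof (induction c rule: dec.induct)
  case (1 c)
  show ?case
  proof (cases "c = 0")
    case True then show ?thesis by (simp add: dec.simps)
  next
    case False
    then have "enc_list (dec c) = Suc (pe (hdc c) (tlc c))"
      using 1 by (simp add: dec.simps[of c] enc_list_Cons)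
    also have "\<dots> = c" using False by (simp add: hdc_def tlc_def)
    finally show ?thesis .
  qed
qed

lemma dec_enc[simp]: "dec (enc_list xs) = xs"
  by (metis enc_dec enc_list_inj)

lemma lb_Suc: "lb (Suc L) S = Suc (pe S (lb L S))"
  by (simp add: lb_def)

lemma lb_bound: "length xs \<le> L \<Longrightarrow> \<forall>x\<in>set xs. x \<le> S \<Longrightarrow> enc_list xs \<le> lb L S"
proof (induction xs arbitrary: L)
  case Nil then show ?case by simp
next
  case (Cons x xs)
  then obtain L' where L: "L = Suc L'" by (cases L) auto
  have "enc_list xs \<le> lb L' S" using Cons L by auto
  then show ?case using Cons.prems L by (auto simp: lb_Suc enc_list_Cons intro!: pe_mono)
qed




lemma cd_max[intro]: "compD D f \<Longrightarrow> compD D g \<Longrightarrow> compD D (\<lambda>x. max (f x) (g x))"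
proof -
  assume "compD D f" "compD D g"
  then have "compD D (\<lambda>x. if f x \<le> g x then g x else f x)" by (intro cd_rules)
  then show ?thesis by (simp add: max_def)
qed

definition inl :: "nat \<Rightarrow> nat \<Rightarrow> bool" where "inl L v \<longleftrightarrow> (\<exists>j<lenc L. nthc L j = v)"
definition enc3 :: "nat \<Rightarrow> nat \<Rightarrow> nat \<Rightarrow> nat" where
  "enc3 a b c = Suc (pe a (Suc (pe b (Suc (pe c 0)))))"
definition trc :: "nat \<Rightarrow> nat" where "trc N = nthc N 0"
definition inic :: "nat \<Rightarrow> nat" where "inic N = nthc N 1"
definition finc :: "nat \<Rightarrow> nat" where "finc N = nthc N 2"

definition memc :: "nat \<Rightarrow> nat \<Rightarrow> (nat \<Rightarrow> nat) \<Rightarrow> bool" where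
  "memc N m lt \<longleftrightarrow> (\<exists>r<Suc (lb (Suc m) N). lenc r = Suc m \<and> inl (inic N) (nthc r 0)
     \<and> inl (finc N) (nthc r m) \<and> (\<forall>i<m. inl (trc N) (enc3 (nthc r i) (lt i) (nthc r (Suc i)))))"

definition memL :: "nat \<Rightarrow> nat \<Rightarrow> bool" where "memL N u \<longleftrightarrow> memc N (lenc u) (nthc u)"
definition optc :: "nat \<Rightarrow> nat \<Rightarrow> nat" where "optc u i = (if i < lenc u then Suc (nthc u i) else 0)"
definition memP :: "nat \<Rightarrow> nat \<Rightarrow> nat \<Rightarrow> bool" where
  "memP N u v \<longleftrightarrow> memc N (max (lenc u) (lenc v)) (\<lambda>i. pe (optc u i) (optc v i))"

lemma cd_memL[intro]: "compD D f \<Longrightarrow> compD D g \<Longrightarrow> compD D (\<lambda>x. of_bool (memL (f x) (g x)))"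
proof -
  assume a: "compD D f" "compD D g"
  have "compD UNIV (\<lambda>q. of_bool (memL (p1 q) (p2 q)))"
    unfolding memL_def memc_def inl_def enc3_def trc_def inic_def finc_def
    by (intro cd_rules cd_nthc cd_lenc cd_lb)
  then show ?thesis using cd_app2[where F="\<lambda>a b. of_bool (memL a b)"] a by blast
qed

lemma cd_memP[intro]: "compD D f \<Longrightarrow> compD D g \<Longrightarrow> compD D h \<Longrightarrow>
   compD D (\<lambda>x. of_bool (memP (f x) (g x) (h x)))"
proof -
  assume a: "compD D f" "compD D g" "compD D h"
  have "compD UNIV (\<lambda>q. of_bool (memP (p1 q) (p1 (p2 q)) (p2 (p2 q))))"
    unfolding memP_def memc_def inl_def enc3_def trc_def inic_def finc_def optc_def
    by (intro cd_rules cd_nthc cd_lenc cd_lb cd_max)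
  then have "compD D (\<lambda>x. of_bool (memP (p1 (pe (f x) (pe (g x) (h x)))) (p1 (p2 (pe (f x) (pe (g x) (h x)))))
       (p2 (p2 (pe (f x) (pe (g x) (h x)))))))"
    using cd_compose[OF _ cd_pe[OF a(1) cd_pe[OF a(2,3)]]] by blast
  then show ?thesis by simp
qed

definition run :: "(nat \<times> 'l \<times> nat) list \<Rightarrow> nat list \<Rightarrow> 'l list \<Rightarrow> bool" where
  "run tr r z \<longleftrightarrow> length r = Suc (length z) \<and> (\<forall>i<length z. (r ! i, z ! i, r ! Suc i) \<in> set tr)"

lemma reach_run: "reach tr p z q \<longleftrightarrow> (\<exists>r. run tr r z \<and> r ! 0 = p \<and> r ! length z = q)"
proof (induction z arbitrary: p)
  case Nil
  show ?case
  proof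
    assume "reach tr p [] q" then show "\<exists>r. run tr r [] \<and> r ! 0 = p \<and> r ! length [] = q"
      by (intro exI[of _ "[p]"]) (auto simp: run_def)
  next
    assume "\<exists>r. run tr r [] \<and> r ! 0 = p \<and> r ! length [] = q" then show "reach tr p [] q"
      by (auto simp: run_def)
  qed
next
  case (Cons x xs)
  show ?case
  proof
    assume "reach tr p (x # xs) q"
    then obtain p' where t: "(p, x, p') \<in> set tr" and "reach tr p' xs q" by auto
    then obtain r where r: "run tr r xs" "r ! 0 = p'" "r ! length xs = q" using Cons by blast
    have "run tr (p # r) (x # xs)"
      using r t unfolding run_def by (auto simp: nth_Cons split: nat.splits)
    then show "\<exists>r. run tr r (x # xs) \<and> r ! 0 = p \<and> r ! length (x # xs) = q"
      using r by (intro exI[of _ "p # r"]) auto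
  next
    assume "\<exists>r. run tr r (x # xs) \<and> r ! 0 = p \<and> r ! length (x # xs) = q"
    then obtain r where r: "run tr r (x # xs)" "r ! 0 = p" "r ! length (x # xs) = q" by blast
    then obtain r0 r' where rr: "r = r0 # r'" unfolding run_def by (cases r) auto
    have "run tr r' xs" unfolding run_def
    proof (intro conjI allI impI)
      show "length r' = Suc (length xs)" using r(1) unfolding run_def rr by simp
      fix i assume "i < length xs"
      then have "((r0 # r') ! Suc i, (x # xs) ! Suc i, (r0 # r') ! Suc (Suc i)) \<in> set tr"
        using r(1) unfolding run_def rr by (metis Suc_less_eq length_Cons)
      then show "(r' ! i, xs ! i, r' ! Suc i) \<in> set tr" by simp
    qed
    moreover have "(p, x, r' ! 0) \<in> set tr" using r(1,2) unfolding run_def rr by fastforce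
    ultimately show "reach tr p (x # xs) q" using Cons r(3) rr by auto
  qed
qed

lemma inl_enc[simp]: "inl (enc_list L) v \<longleftrightarrow> v \<in> set L"
  unfolding inl_def by (auto simp: in_set_conv_nth)

lemma enc3_eq: "enc3 a b c = enc_list [a, b, c]"
  by (simp add: enc3_def)

lemma enc_nfa_parts:
  "enc_nfa e (tr, ini, fin) = enc_list [enc_list (map (\<lambda>(p, x, q). enc_list [p, e x, q]) tr), enc_list ini, enc_list fin]"
  by (simp add: enc_nfa_def)

lemma nfa_parts[simp]:
  "trc (enc_nfa e (tr, ini, fin)) = enc_list (map (\<lambda>(p, x, q). enc_list [p, e x, q]) tr)"
  "inic (enc_nfa e (tr, ini, fin)) = enc_list ini"
  "finc (enc_nfa e (tr, ini, fin)) = enc_list fin"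
  unfolding trc_def inic_def finc_def enc_nfa_parts by (subst nthc_enc; simp)+

lemma tr_mem: "inj e \<Longrightarrow> enc3 a (e y) c \<in> set (map (\<lambda>(p, x, q). enc_list [p, e x, q]) tr) \<longleftrightarrow> (a, y, c) \<in> set tr"
proof
  assume "inj e" "enc3 a (e y) c \<in> set (map (\<lambda>(p, x, q). enc_list [p, e x, q]) tr)"
  then show "(a, y, c) \<in> set tr" unfolding enc3_eq by (auto simp del: enc_list_Cons simp: inj_eq)
next
  assume "(a, y, c) \<in> set tr"
  then show "enc3 a (e y) c \<in> set (map (\<lambda>(p, x, q). enc_list [p, e x, q]) tr)"
    unfolding enc3_eq set_map by (rule rev_image_eqI) simp
qed

lemma states_bound:
  assumes "q \<in> set ini \<or> (\<exists>p x. (p, x, q) \<in> set tr)"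
  shows "q \<le> enc_nfa e (tr, ini, fin)"
  using assms
proof
  assume "q \<in> set ini"
  then have "q < enc_list ini" by (rule set_lt_enc)
  also have "enc_list ini < enc_nfa e (tr, ini, fin)" unfolding enc_nfa_parts by (intro set_lt_enc) simp
  finally show ?thesis by simp
next
  assume "\<exists>p x. (p, x, q) \<in> set tr"
  then obtain p x where t: "(p, x, q) \<in> set tr" by blast
  have "q < enc_list [p, e x, q]" by (intro set_lt_enc) simp
  also have "enc_list [p, e x, q] < enc_list (map (\<lambda>(p, x, q). enc_list [p, e x, q]) tr)"
    using t by (intro set_lt_enc) force
  also have "\<dots> < enc_nfa e (tr, ini, fin)" unfolding enc_nfa_parts by (intro set_lt_enc) simp
  finally show ?thesis by simp
qed

lemma memc_correct:
  assumes inj: "inj e" and lt: "\<And>i. i < length z \<Longrightarrow> lt i = e (z ! i)"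
  shows "memc (enc_nfa e N) (length z) lt \<longleftrightarrow> z \<in> lang N"
proof -
  obtain tr ini fin where N: "N = (tr, ini, fin)" by (cases N)
  let ?c = "enc_nfa e (tr, ini, fin)"
  show ?thesis
  proof
    assume "memc (enc_nfa e N) (length z) lt"
    then obtain rc where rc: "lenc rc = Suc (length z)" "inl (enc_list ini) (nthc rc 0)"
      "inl (enc_list fin) (nthc rc (length z))"
      "\<forall>i<length z. inl (enc_list (map (\<lambda>(p, x, q). enc_list [p, e x, q]) tr)) (enc3 (nthc rc i) (lt i) (nthc rc (Suc i)))"
      unfolding memc_def N by auto
    define rs where "rs = dec rc"
    have rce: "rc = enc_list rs" unfolding rs_def by simp
    have len: "length rs = Suc (length z)" using rc(1) rce by simp
    have nth: "\<And>i. i < Suc (length z) \<Longrightarrow> nthc rc i = rs ! i" using len rce by simp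
    have "run tr rs z" unfolding run_def
    proof (intro conjI allI impI)
      show "length rs = Suc (length z)" by (rule len)
      fix i assume i: "i < length z"
      have "inl (enc_list (map (\<lambda>(p, x, q). enc_list [p, e x, q]) tr)) (enc3 (nthc rc i) (lt i) (nthc rc (Suc i)))"
        using rc(4) i by blast
      then have "enc3 (rs ! i) (e (z ! i)) (rs ! Suc i) \<in> set (map (\<lambda>(p, x, q). enc_list [p, e x, q]) tr)"
        using i lt[OF i] nth[of i] nth[of "Suc i"] by (simp only: inl_enc)
      then show "(rs ! i, z ! i, rs ! Suc i) \<in> set tr" using tr_mem[OF inj] by blast
    qed
    moreover have "rs ! 0 \<in> set ini" "rs ! length z \<in> set fin" using rc(2,3) nth by auto
    ultimately show "z \<in> lang N" unfolding N lang_def using reach_run by fastforce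
  next
    assume "z \<in> lang N"
    then obtain p q where pq: "p \<in> set ini" "q \<in> set fin" "reach tr p z q"
      unfolding N lang_def by auto
    then obtain r where r: "run tr r z" "r ! 0 = p" "r ! length z = q" using reach_run by metis
    have len: "length r = Suc (length z)" using r(1) by (simp add: run_def)
    have bnd: "\<forall>x\<in>set r. x \<le> ?c"
    proof
      fix x assume "x \<in> set r"
      then obtain i where i: "i < length r" "x = r ! i" by (auto simp: in_set_conv_nth)
      show "x \<le> ?c"
      proof (cases i)
        case 0 then show ?thesis using i r(2) pq(1) by (auto intro: states_bound)
      next
        case (Suc j)
        then have "(r ! j, z ! j, r ! i) \<in> set tr" using r(1) i len by (auto simp: run_def)
        then show ?thesis using i by (auto intro: states_bound)
      qed
    qed
    have "enc_list r \<le> lb (Suc (length z)) ?c" using len bnd by (intro lb_bound) auto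
    moreover have "\<forall>i<length z. inl (trc ?c) (enc3 (nthc (enc_list r) i) (lt i) (nthc (enc_list r) (Suc i)))"
    proof (intro allI impI)
      fix i assume i: "i < length z"
      have "(r ! i, z ! i, r ! Suc i) \<in> set tr" using r(1) i by (auto simp: run_def)
      then show "inl (trc ?c) (enc3 (nthc (enc_list r) i) (lt i) (nthc (enc_list r) (Suc i)))"
        using i len lt[OF i] tr_mem[OF inj] by simp
    qed
    ultimately show "memc (enc_nfa e N) (length z) lt" unfolding memc_def N
      using len r pq by (intro exI[of _ "enc_list r"]) auto
  qed
qed




definition cut :: "nat \<Rightarrow> nat \<Rightarrow> 'a list \<Rightarrow> 'a list" where
  "cut j j' u = take j u @ drop j' u"

definition opt :: "'a list \<Rightarrow> nat \<Rightarrow> 'a option" where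
  "opt u k = (if k < length u then Some (u ! k) else None)"

lemma pad_conv_alt: "pad_conv u v = map (\<lambda>k. (opt u k, opt v k)) [0..<max (length u) (length v)]"
  by (rule nth_equalityI) (auto simp: pad_conv_def opt_def nth_append)

lemma length_pad_conv[simp]: "length (pad_conv u v) = max (length u) (length v)"
  by (simp add: pad_conv_alt)

lemma nth_pad_conv: "k < max (length u) (length v) \<Longrightarrow> pad_conv u v ! k = (opt u k, opt v k)"
  by (simp add: pad_conv_alt)

lemma length_cut: "j \<le> j' \<Longrightarrow> length (cut j j' u) = min j (length u) + (length u - j')"
  by (simp add: cut_def)

lemma nth_cut: "j \<le> j' \<Longrightarrow> k < length (cut j j' u) \<Longrightarrow>
   cut j j' u ! k = (if k < j then u ! k else u ! (k + (j' - j)))"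
  by (auto simp: cut_def nth_append min_def split: if_splits) (simp add: add.commute)

lemma opt_cut: "j \<le> j' \<Longrightarrow> opt (cut j j' u) k = (if k < j then opt u k else opt u (k + (j' - j)))"
  by (auto simp: opt_def length_cut nth_cut)

lemma cut_pad_conv: assumes "j \<le> j'"
  shows "pad_conv (cut j j' u) (cut j j' v) = cut j j' (pad_conv u v)"
proof (rule nth_equalityI)
  have g: "max (min j a + (a - j')) (min j b + (b - j')) = min j (max a b) + (max a b - j')" for a b :: nat
    by (auto simp: max_def min_def)
  show len: "length (pad_conv (cut j j' u) (cut j j' v)) = length (cut j j' (pad_conv u v))"
    using assms by (simp add: length_cut g)
  fix k assume k: "k < length (pad_conv (cut j j' u) (cut j j' v))"
  then have k2: "k < length (cut j j' (pad_conv u v))" using len by simp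
  show "pad_conv (cut j j' u) (cut j j' v) ! k = cut j j' (pad_conv u v) ! k"
  proof (cases "k < j")
    case True
    then have "k < max (length u) (length v)" using k2 assms by (simp add: length_cut)
    then show ?thesis using k k2 True assms by (simp add: nth_pad_conv nth_cut opt_cut)
  next
    case False
    then have "k + (j' - j) < max (length u) (length v)" using k2 assms by (simp add: length_cut)
    then show ?thesis using k k2 False assms by (simp add: nth_pad_conv nth_cut opt_cut)
  qed
qed

lemma cut_short: "length u \<le> j \<Longrightarrow> j \<le> j' \<Longrightarrow> cut j j' u = u"
  by (simp add: cut_def)

lemma reach_append: "reach tr p (a @ b) q \<longleftrightarrow> (\<exists>m. reach tr p a m \<and> reach tr m b q)"
  by (induction a arbitrary: p) auto

lemma run_take: "run tr r z \<Longrightarrow> b \<le> length z \<Longrightarrow> reach tr (r ! 0) (take b z) (r ! b)"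
proof -
  assume r: "run tr r z" and b: "b \<le> length z"
  have "run tr (take (Suc b) r) (take b z)" using r b unfolding run_def by auto
  then show ?thesis using b r unfolding reach_run run_def
    by (intro exI[of _ "take (Suc b) r"]) auto
qed

lemma run_drop: "run tr r z \<Longrightarrow> a \<le> length z \<Longrightarrow> reach tr (r ! a) (drop a z) (r ! length z)"
proof -
  assume r: "run tr r z" and a: "a \<le> length z"
  have "run tr (drop a r) (drop a z)" using r a unfolding run_def by (auto simp: add.commute)
  then show ?thesis using a r unfolding reach_run run_def
    by (intro exI[of _ "drop a r"]) auto
qed

lemma run_cut:
  assumes r: "run tr r z" and jj: "j \<le> j'" and eq: "r ! min j (length z) = r ! min j' (length z)"
  shows "reach tr (r ! 0) (cut j j' z) (r ! length z)"
proof -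
  have "take j z = take (min j (length z)) z" by (simp add: min_def)
  then have a: "reach tr (r ! 0) (take j z) (r ! min j (length z))"
    using run_take[OF r, of "min j (length z)"] by simp
  have "drop j' z = drop (min j' (length z)) z" by (simp add: min_def)
  then have b: "reach tr (r ! min j' (length z)) (drop j' z) (r ! length z)"
    using run_drop[OF r, of "min j' (length z)"] by simp
  show ?thesis unfolding cut_def reach_append using a b eq by auto
qed

lemma run_states: "run tr r z \<Longrightarrow> k < length r \<Longrightarrow> k = 0 \<or> (\<exists>p x. (p, x, r ! k) \<in> set tr)"
  unfolding run_def by (cases k) auto

definition states_le :: "('l nfa) \<Rightarrow> nat \<Rightarrow> bool" where
  "states_le N S \<longleftrightarrow> (case N of (tr, ini, fin) \<Rightarrow>
     (\<forall>q. (q \<in> set ini \<or> (\<exists>p x. (p, x, q) \<in> set tr)) \<longrightarrow> q \<le> S))"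

definition chain :: "nat \<Rightarrow> (nat \<Rightarrow> (nat option \<times> nat option) nfa) \<Rightarrow> nat list list \<Rightarrow> bool" where
  "chain n NF xs \<longleftrightarrow> length xs = Suc n \<and> (\<forall>i<n. pad_conv (xs ! i) (xs ! Suc i) \<in> lang (NF i))"

lemma lang_run: "z \<in> lang N \<Longrightarrow> \<exists>r. run (fst N) r z \<and> r ! 0 \<in> set (fst (snd N)) \<and>
   r ! length z \<in> set (snd (snd N))"
  unfolding lang_def reach_run by (cases N) auto

lemma run_lang: "run (fst N) r z \<Longrightarrow> r ! 0 \<in> set (fst (snd N)) \<Longrightarrow> r ! length z \<in> set (snd (snd N))
   \<Longrightarrow> z \<in> lang N"
  unfolding lang_def reach_run by (cases N) auto

lemma pumping_step:
  assumes ch: "chain n NF xs" and last: "xs ! n = e"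
    and st: "\<And>i. i < n \<Longrightarrow> states_le (NF i) (S i)"
    and long: "l < Suc n" "length (xs ! l) > length e + (\<Prod>i<n. Suc (S i))"
  shows "\<exists>ys. chain n NF ys \<and> ys ! n = e \<and> (\<Sum>y\<leftarrow>ys. length y) < (\<Sum>x\<leftarrow>xs. length x)"
proof -
  define P where "P = (\<Prod>i<n. Suc (S i))"
  define pc where "pc i = pad_conv (xs ! i) (xs ! Suc i)" for i
  have mem: "pc i \<in> lang (NF i)" if "i < n" for i using ch that unfolding chain_def pc_def by auto
  define R where "R i = (SOME r. run (fst (NF i)) r (pc i) \<and> r ! 0 \<in> set (fst (snd (NF i))) \<and>
      r ! length (pc i) \<in> set (snd (snd (NF i))))" for i
  have R: "run (fst (NF i)) (R i) (pc i) \<and> R i ! 0 \<in> set (fst (snd (NF i))) \<and>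
      R i ! length (pc i) \<in> set (snd (snd (NF i)))" if "i < n" for i
    unfolding R_def by (rule someI_ex) (rule lang_run[OF mem[OF that]])
  define V where "V p = restrict (\<lambda>i. R i ! min p (length (pc i))) {..<n}" for p
  have Vin: "V p \<in> PiE {..<n} (\<lambda>i. {0..S i})" for p
  proof -
    have "R i ! min p (length (pc i)) \<le> S i" if i: "i < n" for i
    proof -
      obtain tr ini fin where N: "NF i = (tr, ini, fin)" by (cases "NF i")
      have run: "run tr (R i) (pc i)" and r0: "R i ! 0 \<in> set ini" using R[OF i] N by auto
      have len: "length (R i) = Suc (length (pc i))" using run by (simp add: run_def)
      have "min p (length (pc i)) < length (R i)" using len by simp
      then have "min p (length (pc i)) = 0 \<or> (\<exists>p' x. (p', x, R i ! min p (length (pc i))) \<in> set tr)"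
        using run_states[OF run] by blast
      then show ?thesis using st[OF i] r0 N unfolding states_le_def by auto
    qed
    then show ?thesis unfolding V_def by auto
  qed
  have cardV: "card (PiE {..<n} (\<lambda>i. {0..S i})) = P"
    unfolding P_def by (simp add: card_PiE)
  have "\<not> inj_on V {length e..length e + P}"
  proof
    assume "inj_on V {length e..length e + P}"
    then have "card {length e..length e + P} \<le> card (PiE {..<n} (\<lambda>i. {0..S i}))"
      using Vin by (intro card_inj_on_le) (auto simp: finite_PiE)
    then show False using cardV by simp
  qed
  then obtain j j' where jj: "j \<in> {length e..length e + P}" "j' \<in> {length e..length e + P}" "j < j'" "V j = V j'"
    unfolding inj_on_def by (metis linorder_neqE_nat)
  define ys where "ys = map (cut j j') xs"
  have lenxs: "length xs = Suc n" using ch by (simp add: chain_def)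
  have "chain n NF ys" unfolding chain_def
  proof (intro conjI allI impI)
    show "length ys = Suc n" using lenxs by (simp add: ys_def)
    fix i assume i: "i < n"
    obtain tr ini fin where N: "NF i = (tr, ini, fin)" by (cases "NF i")
    have "R i ! min j (length (pc i)) = R i ! min j' (length (pc i))"
      using fun_cong[OF jj(4), of i] i by (simp add: V_def)
    then have "reach tr (R i ! 0) (cut j j' (pc i)) (R i ! length (pc i))"
      using R[OF i] N jj(3) by (intro run_cut) auto
    then have "cut j j' (pc i) \<in> lang (NF i)" using R[OF i] N unfolding lang_def by auto
    then show "pad_conv (ys ! i) (ys ! Suc i) \<in> lang (NF i)"
      using i lenxs jj(3) by (simp add: ys_def pc_def cut_pad_conv)
  qed
  moreover have "ys ! n = e" using lenxs jj unfolding ys_def last[symmetric]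
    by (simp add: cut_short)
  moreover have "(\<Sum>y\<leftarrow>ys. length y) < (\<Sum>x\<leftarrow>xs. length x)"
  proof -
    have le: "length (cut j j' x) \<le> length x" for x :: "nat list"
      using jj(3) by (simp add: length_cut)
    have lt: "length (cut j j' (xs ! l)) < length (xs ! l)"
      using jj long unfolding P_def by (simp add: length_cut)
    have "(\<Sum>y\<leftarrow>ys. length y) = (\<Sum>i<Suc n. length (cut j j' (xs ! i)))"
      unfolding ys_def using lenxs by (simp add: sum_list_sum_nth atLeast0LessThan)
    also have "\<dots> < (\<Sum>i<Suc n. length (xs ! i))"
      using le lt long(1) by (intro sum_strict_mono_ex1) auto
    also have "\<dots> = (\<Sum>x\<leftarrow>xs. length x)"
      using lenxs by (simp add: sum_list_sum_nth atLeast0LessThan)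
    finally show ?thesis .
  qed
  ultimately show ?thesis by blast
qed

lemma pumping:
  assumes "chain n NF xs" "xs ! n = e" "\<And>i. i < n \<Longrightarrow> states_le (NF i) (S i)"
  shows "\<exists>ys. chain n NF ys \<and> ys ! n = e \<and> (\<forall>i<Suc n. length (ys ! i) \<le> length e + (\<Prod>i<n. Suc (S i)))"
  using assms(1,2)
proof (induction "\<Sum>x\<leftarrow>xs. length x" arbitrary: xs rule: less_induct)
  case less
  show ?case
  proof (cases "\<forall>i<Suc n. length (xs ! i) \<le> length e + (\<Prod>i<n. Suc (S i))")
    case True then show ?thesis using less by blast
  next
    case False
    then obtain l where "l < Suc n" "length (xs ! l) > length e + (\<Prod>i<n. Suc (S i))" by (auto simp: not_le)
    then obtain ys where "chain n NF ys" "ys ! n = e" "(\<Sum>y\<leftarrow>ys. length y) < (\<Sum>x\<leftarrow>xs. length x)"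
      using pumping_step[OF less.prems assms(3)] by blast
    then show ?thesis using less.hyps by blast
  qed
qed




lemma inj_enc_opt: "inj enc_opt"
  unfolding inj_def enc_opt_def by (auto split: option.splits)

lemma inj_epl: "inj enc_pair_letter"
  unfolding inj_def enc_pair_letter_def using inj_enc_opt
  by (auto simp: inj_eq prod_eq_iff)

lemma memL_correct: "memL (enc_nfa id N) (enc_list u) \<longleftrightarrow> u \<in> lang N"
  unfolding memL_def using memc_correct[of id u "nthc (enc_list u)" N] by simp

lemma optc_enc: "optc (enc_list u) i = enc_opt (opt u i)"
  by (simp add: optc_def opt_def enc_opt_def)

lemma memP_correct: "memP (enc_nfa enc_pair_letter N) (enc_list u) (enc_list v) \<longleftrightarrow> pad_conv u v \<in> lang N"
proof -
  have "memc (enc_nfa enc_pair_letter N) (length (pad_conv u v))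
          (\<lambda>i. pe (optc (enc_list u) i) (optc (enc_list v) i)) \<longleftrightarrow> pad_conv u v \<in> lang N"
    by (rule memc_correct[OF inj_epl])
       (simp add: nth_pad_conv optc_enc enc_pair_letter_def pe_def)
  then show ?thesis unfolding memP_def by simp
qed

lemma map_fst_pad_conv: "map fst (pad_conv u v) = map Some u @ replicate (length v - length u) None"
  unfolding pad_conv_def by (simp add: map_fst_zip)
lemma map_snd_pad_conv: "map snd (pad_conv u v) = map Some v @ replicate (length u - length v) None"
  unfolding pad_conv_def by (simp add: map_snd_zip)

lemma recover: "map the (filter (\<lambda>x. x \<noteq> None) (map Some u @ replicate a None)) = u"
  by (induction u) (auto simp: filter_replicate)

lemma pad_conv_inj: "pad_conv u v = pad_conv u' v' \<Longrightarrow> u = u' \<and> v = v'"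
  by (metis map_fst_pad_conv map_snd_pad_conv recover)

section \<open>Code-level algorithm\<close>

definition "K x = nthc x 0"
definition "CNL x = nthc x 1"
definition "CEQ x = nthc x 2"
definition "CNA x = nthc x 3"
definition "CIO x = nthc x 4"
definition "CW x = nthc x 5"

definition Epred :: "nat \<Rightarrow> nat \<Rightarrow> bool" where
  "Epred x u \<longleftrightarrow> memL (CNL x) u \<and> (u = 0 \<or> (\<not> memL (CNL x) 0 \<and>
      (\<forall>a<K x. memP (nthc (CNA x) a) u (nthc (CIO x) a))))"

definition E :: "nat \<Rightarrow> nat" where "E x = (LEAST u. Epred x u)"

definition validX :: "nat \<Rightarrow> nat \<Rightarrow> nat \<Rightarrow> bool" where
  "validX x e xc \<longleftrightarrow> lenc xc = Suc (lenc (CW x)) \<and> nthc xc (lenc (CW x)) = e \<and>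
     (\<forall>i<lenc (CW x). memP (nthc (CNA x) (nthc (CW x) i)) (nthc xc i) (nthc xc (Suc i)))"

definition zl :: "nat \<Rightarrow> nat \<Rightarrow> nat \<Rightarrow> nat" where
  "zl x x0 i = (if i < lenc (CW x) then nthc (CW x) i else nthc x0 (i - lenc (CW x)))"

definition validY :: "nat \<Rightarrow> nat \<Rightarrow> nat \<Rightarrow> nat \<Rightarrow> bool" where
  "validY x e xc yc \<longleftrightarrow> lenc yc = Suc (lenc (CW x) + lenc (nthc xc 0)) \<and> nthc yc 0 = e \<and>
     (\<forall>i<lenc (CW x) + lenc (nthc xc 0).
        memP (nthc (CNA x) (zl x (nthc xc 0) i)) (nthc yc i) (nthc yc (Suc i)))"

definition Pb :: "nat \<Rightarrow> nat" where
  "Pb x = (\<Prod>i<lenc (CW x). Suc (nthc (CNA x) (nthc (CW x) i)))"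

definition Cb :: "nat \<Rightarrow> nat \<Rightarrow> nat" where
  "Cb x e = lb (Suc (lenc (CW x))) (lb (lenc e + Pb x) (K x))"

definition hasX :: "nat \<Rightarrow> nat \<Rightarrow> bool" where
  "hasX x e \<longleftrightarrow> (\<exists>xc<Suc (Cb x e). validX x e xc)"

definition Cpred :: "nat \<Rightarrow> nat \<Rightarrow> bool" where
  "Cpred y c \<longleftrightarrow> (hasX (p1 y) (p2 y) \<longrightarrow> validX (p1 y) (p2 y) (p1 c) \<and> validY (p1 y) (p2 y) (p1 c) (p2 c))"

definition Cst :: "nat \<Rightarrow> nat" where "Cst y = (LEAST c. Cpred y c)"

definition Fin :: "nat \<Rightarrow> nat \<Rightarrow> nat" where
  "Fin y c = of_bool (hasX (p1 y) (p2 y) \<and> memP (CEQ (p1 y)) (nthc (p2 c) (lenc (p2 c) - 1)) (p2 y))"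

definition alg :: "nat \<Rightarrow> nat" where "alg x = Fin (pe x (E x)) (Cst (pe x (E x)))"

lemma alg_computable:
  "compD {x. (\<exists>u. Epred x u) \<and> (\<exists>c. Cpred (pe x (E x)) c)} alg"
proof -
  let ?D = "{x. (\<exists>u. Epred x u) \<and> (\<exists>c. Cpred (pe x (E x)) c)}"
  have cE: "compD ?D E" unfolding E_def
    by (rule cd_least_raw)
       (unfold Epred_def K_def CNL_def CNA_def CIO_def, intro cd_rules cd_nthc cd_memL cd_memP, auto)
  have cg: "compD ?D (\<lambda>x. pe x (E x))" by (intro cd_rules cE)
  have cP: "compD UNIV (\<lambda>q. of_bool (Cpred (p1 q) (p2 q)))"
    unfolding Cpred_def hasX_def validX_def validY_def Cb_def Pb_def zl_def K_def CNA_def CW_def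
    by (intro cd_rules cd_nthc cd_memL cd_memP cd_lenc cd_lb)
  have cC: "compD ?D (\<lambda>x. Cst (pe x (E x)))" unfolding Cst_def
    by (rule cd_least_g[where g="\<lambda>x. pe x (E x)", OF cP cg]) auto
  have cF: "compD UNIV (\<lambda>q. Fin (p1 q) (p2 q))"
    unfolding Fin_def hasX_def validX_def Cb_def Pb_def K_def CNA_def CW_def CEQ_def
    by (intro cd_rules cd_nthc cd_memL cd_memP cd_lenc cd_lb)
  show ?thesis unfolding alg_def
    by (rule cd_app2[OF cF]) (intro cd_rules cE cC)+
qed




lemma reach_letters: "reach tr p z q \<Longrightarrow> set z \<subseteq> (\<lambda>(p, x, q). x) ` set tr"
  by (induction z arbitrary: p) (auto, force)

lemma lang_letters: "u \<in> lang N \<Longrightarrow> set u \<subseteq> nfa_letters N"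
  unfolding lang_def nfa_letters_def by (cases N) (auto dest: reach_letters)

lemma dropc_Suc': "dropc (Suc i) c = dropc i (tlc c)"
  by (induction i) (auto simp: dropc_def)

lemma nthc_Suc0[simp]: "nthc (Suc (pe a b)) 0 = a" by (simp add: nthc_def dropc_def)
lemma nthc_SucS[simp]: "nthc (Suc (pe a b)) (Suc i) = nthc b i"
  by (simp add: nthc_def dropc_Suc')

locale valid_in = monoid M for M :: "nat monoid" (structure) +
  fixes k NL Neq Na io w \<sigma>
  assumes pa: "pre_automatic k NL Neq Na"
    and ip: "is_interpretation k NL Neq Na M \<sigma>"
    and cw: "consistent_with k NL io \<sigma>"
    and wl: "w \<in> lists {0..<k}"
begin

definition "inp = enc_input k NL Neq Na io w"
abbreviation "L \<equiv> lang NL"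

lemma lenNa: "length Na = k" using pa by (simp add: pre_automatic_def)
lemma lenio: "length io = k" using cw by (simp add: consistent_with_def)

lemma inp_parts:
  "K inp = k" "CNL inp = enc_nfa id NL" "CEQ inp = enc_nfa enc_pair_letter Neq"
  "CNA inp = enc_list (map (enc_nfa enc_pair_letter) Na)" "CIO inp = enc_list (map enc_list io)"
  "CW inp = enc_list w"
  unfolding inp_def enc_input_def K_def CNL_def CEQ_def CNA_def CIO_def CW_def
  by (simp_all add: numeral_eq_Suc)

lemma nthNA: "a < k \<Longrightarrow> nthc (CNA inp) a = enc_nfa enc_pair_letter (Na ! a)"
  by (simp add: inp_parts lenNa)
lemma nthIO: "a < k \<Longrightarrow> nthc (CIO inp) a = enc_list (io ! a)"
  by (simp add: inp_parts lenio)

lemma L_lists: "u \<in> L \<Longrightarrow> u \<in> lists {0..<k}"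
  using lang_letters[of u NL] pa unfolding pre_automatic_def by auto

lemma wm: "word_morphism k M \<sigma>" using ip by (simp add: is_interpretation_def)
lemma sig_nil: "\<sigma> [] = \<one>" using wm by (simp add: word_morphism_def)
lemma sig_car: "u \<in> lists {0..<k} \<Longrightarrow> \<sigma> u \<in> carrier M" using wm by (simp add: word_morphism_def)
lemma sig_app: "u \<in> lists {0..<k} \<Longrightarrow> v \<in> lists {0..<k} \<Longrightarrow> \<sigma> (u @ v) = \<sigma> u \<otimes> \<sigma> v"
  using wm by (simp add: word_morphism_def)
lemma sig_surj: "\<sigma> ` L = carrier M" using ip by (simp add: is_interpretation_def)

lemma pair_L: assumes "N \<in> insert Neq (set Na)" "pad_conv u v \<in> lang N" shows "u \<in> L" "v \<in> L"
proof -
  have "lang N \<subseteq> {pad_conv u v | u v. u \<in> L \<and> v \<in> L}" using pa assms(1) unfolding pre_automatic_def by blast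
  then obtain u' v' where "pad_conv u v = pad_conv u' v'" "u' \<in> L" "v' \<in> L" using assms(2) by blast
  then show "u \<in> L" "v \<in> L" using pad_conv_inj by blast+
qed

lemma Na_in: "a < k \<Longrightarrow> Na ! a \<in> insert Neq (set Na)" using lenNa by auto

lemma interp_a: "a < k \<Longrightarrow> u \<in> L \<Longrightarrow> v \<in> L \<Longrightarrow> pad_conv u v \<in> lang (Na ! a) \<longleftrightarrow> \<sigma> (u @ [a]) = \<sigma> v"
  using ip by (simp add: is_interpretation_def)
lemma interp_eq: "u \<in> L \<Longrightarrow> v \<in> L \<Longrightarrow> pad_conv u v \<in> lang Neq \<longleftrightarrow> \<sigma> u = \<sigma> v"
  using ip by (simp add: is_interpretation_def)

lemma io_L: "a < k \<Longrightarrow> io ! a \<in> L" and io_sig: "a < k \<Longrightarrow> \<sigma> [a] = \<sigma> (io ! a)"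
  using cw by (auto simp: consistent_with_def)

lemma memP_a: "a < k \<Longrightarrow> memP (nthc (CNA inp) a) (enc_list u) (enc_list v) \<longleftrightarrow> pad_conv u v \<in> lang (Na ! a)"
  by (simp add: nthNA memP_correct)

lemma memL_NL: "memL (CNL inp) (enc_list u) \<longleftrightarrow> u \<in> L"
  by (simp add: inp_parts memL_correct)

section \<open>The identity representative\<close>

lemma Epred_enc: "Epred inp (enc_list u) \<longleftrightarrow> u \<in> L \<and> (u = [] \<or> ([] \<notin> L \<and> (\<forall>a<k. \<sigma> (u @ [a]) = \<sigma> (io ! a))))"
proof -
  have z: "(0::nat) = enc_list []" by simp
  have m0: "memL (CNL inp) 0 \<longleftrightarrow> [] \<in> L" by (subst z, rule memL_NL)
  have mp: "(\<forall>a<K inp. memP (nthc (CNA inp) a) (enc_list u) (nthc (CIO inp) a)) \<longleftrightarrow> (\<forall>a<k. \<sigma> (u @ [a]) = \<sigma> (io ! a))"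
    if "u \<in> L"
    using that by (simp add: inp_parts(1) nthIO memP_a interp_a io_L del: enc_list_Cons)
  show ?thesis unfolding Epred_def m0 memL_NL using mp by auto
qed

lemma Epred_ex: "\<exists>u. Epred inp u"
proof (cases "[] \<in> L")
  case True then show ?thesis using Epred_enc[of "[]"] by blast
next
  case False
  obtain u where u: "u \<in> L" "\<sigma> u = \<one>" using sig_surj one_closed by (metis imageE)
  have "\<sigma> (u @ [a]) = \<sigma> (io ! a)" if "a < k" for a
  proof -
    have "\<sigma> (u @ [a]) = \<sigma> u \<otimes> \<sigma> [a]" using L_lists[OF u(1)] that by (intro sig_app) auto
    also have "\<dots> = \<sigma> [a]" using u(2) sig_car[of "[a]"] that by simp
    finally show ?thesis using io_sig[OF that] by simp
  qed
  then show ?thesis using Epred_enc[of u] u False by blast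
qed

definition "e0 = dec (E inp)"

lemma E_enc: "E inp = enc_list e0" by (simp add: e0_def)

lemma e0_props: "e0 \<in> L" "\<sigma> e0 = \<one>"
proof -
  have "Epred inp (E inp)" unfolding E_def using Epred_ex by (metis LeastI)
  then have P: "e0 \<in> L \<and> (e0 = [] \<or> ([] \<notin> L \<and> (\<forall>a<k. \<sigma> (e0 @ [a]) = \<sigma> (io ! a))))"
    using Epred_enc[of e0] E_enc by simp
  then show "e0 \<in> L" by simp
  show "\<sigma> e0 = \<one>"
  proof (cases "e0 = []")
    case True then show ?thesis by (simp add: sig_nil)
  next
    case False
    then have nL: "[] \<notin> L" and id: "\<And>a. a < k \<Longrightarrow> \<sigma> (e0 @ [a]) = \<sigma> [a]" using P io_sig by auto
    have e0l: "e0 \<in> lists {0..<k}" using P L_lists by blast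
    have left: "\<sigma> e0 \<otimes> \<sigma> v = \<sigma> v" if "v \<in> lists {0..<k}" "v \<noteq> []" for v
    proof -
      obtain a v' where v: "v = a # v'" using \<open>v \<noteq> []\<close> by (cases v) auto
      have a: "a < k" "v' \<in> lists {0..<k}" using that v by auto
      have "\<sigma> v = \<sigma> [a] \<otimes> \<sigma> v'" using a sig_app[of "[a]" v'] v by simp
      moreover have "\<sigma> e0 \<otimes> \<sigma> [a] = \<sigma> [a]" using id[OF a(1)] sig_app[of e0 "[a]"] e0l a by simp
      ultimately show ?thesis using a e0l by (simp add: m_assoc[symmetric] sig_car)
    qed
    obtain u where u: "u \<in> L" "\<sigma> u = \<one>" using sig_surj one_closed by (metis imageE)
    have "u \<noteq> []" using u nL by auto
    then have "\<sigma> e0 \<otimes> \<sigma> u = \<sigma> u" using left L_lists[OF u(1)] by blast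
    then show ?thesis using u(2) e0l sig_car by simp
  qed
qed

end




context valid_in
begin

lemma wk: "i < length w \<Longrightarrow> w ! i < k" using wl by auto

lemma lists_app: "u \<in> lists {0..<k} \<Longrightarrow> i < length u \<Longrightarrow> u ! i < k"
  by auto

lemma enc_chain_parts:
  assumes "length ys = Suc m"
  shows "lenc (enc_list (map enc_list ys)) = Suc m"
    "\<And>i. i < Suc m \<Longrightarrow> nthc (enc_list (map enc_list ys)) i = enc_list (ys ! i)"
  using assms by auto

lemma dd: "xc = enc_list (map enc_list (map dec (dec xc)))"
  by (simp add: comp_def)

lemma validX_enc:
  "validX inp (E inp) (enc_list (map enc_list ys)) \<longleftrightarrow>
     chain (length w) (\<lambda>i. Na ! (w ! i)) ys \<and> ys ! length w = e0"
proof (cases "length ys = Suc (length w)")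
  case True
  have m: "i < length w \<Longrightarrow> memP (nthc (CNA inp) (nthc (CW inp) i)) (nthc (enc_list (map enc_list ys)) i)
      (nthc (enc_list (map enc_list ys)) (Suc i)) \<longleftrightarrow> pad_conv (ys ! i) (ys ! Suc i) \<in> lang (Na ! (w ! i))" for i
    using True by (simp add: inp_parts(6) memP_a wk del: enc_list_Cons)
  have l: "nthc (enc_list (map enc_list ys)) (length w) = E inp \<longleftrightarrow> ys ! length w = e0"
    using True by (simp add: E_enc del: enc_list_Cons)
  show ?thesis unfolding validX_def chain_def using True m l
    by (simp add: inp_parts(6) del: enc_list_Cons) blast
next
  case False
  then show ?thesis unfolding validX_def chain_def by (simp add: inp_parts(6) del: enc_list_Cons)
qed

lemma chain_L:
  assumes ch: "chain m (\<lambda>i. Na ! (z ! i)) zs" and z: "z \<in> lists {0..<k}" "length z = m"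
    and ends: "zs ! 0 \<in> L \<or> zs ! m \<in> L" and i: "i \<le> m"
  shows "zs ! i \<in> L"
proof (cases "i < m")
  case True
  then have p: "pad_conv (zs ! i) (zs ! Suc i) \<in> lang (Na ! (z ! i))" using ch by (simp add: chain_def)
  have "z ! i < k" using z True by auto
  then show ?thesis using pair_L(1)[OF Na_in p] by simp
next
  case False
  then have im: "i = m" using i by simp
  show ?thesis
  proof (cases m)
    case 0 then show ?thesis using ends im by auto
  next
    case (Suc j)
    then have p: "pad_conv (zs ! j) (zs ! Suc j) \<in> lang (Na ! (z ! j))" using ch by (simp add: chain_def)
    have "z ! j < k" using z Suc by auto
    then show ?thesis using pair_L(2)[OF Na_in p] Suc im by simp
  qed
qed

lemma chain_sig:
  assumes ch: "chain m (\<lambda>i. Na ! (z ! i)) zs" and z: "z \<in> lists {0..<k}" "length z = m"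
    and allL: "\<And>i. i \<le> m \<Longrightarrow> zs ! i \<in> L" and i: "i \<le> m"
  shows "\<sigma> (zs ! 0 @ take i z) = \<sigma> (zs ! i)"
  using i
proof (induction i)
  case 0 then show ?case by simp
next
  case (Suc i)
  then have i: "i < m" by simp
  have zi: "z ! i < k" using z i by auto
  have l0: "zs ! 0 \<in> lists {0..<k}" using allL L_lists by auto
  have lt: "take i z \<in> lists {0..<k}" using z by (meson in_lists_conv_set in_set_takeD)
  have "take (Suc i) z = take i z @ [z ! i]" using i z by (simp add: take_Suc_conv_app_nth)
  then have "\<sigma> (zs ! 0 @ take (Suc i) z) = \<sigma> (zs ! 0 @ take i z) \<otimes> \<sigma> [z ! i]"
    using sig_app[of "zs ! 0 @ take i z" "[z ! i]"] l0 lt zi by simp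
  also have "\<dots> = \<sigma> (zs ! i) \<otimes> \<sigma> [z ! i]" using Suc i by simp
  also have "\<dots> = \<sigma> (zs ! i @ [z ! i])" using sig_app[of "zs ! i" "[z ! i]"] allL[of i] L_lists i zi by simp
  also have "\<dots> = \<sigma> (zs ! Suc i)"
    using ch i interp_a[OF zi allL[of i] allL[of "Suc i"]] by (simp add: chain_def)
  finally show ?case .
qed

lemma walk:
  assumes x0: "x0 \<in> L" and z: "z \<in> lists {0..<k}"
  shows "\<exists>f. f 0 = x0 \<and> (\<forall>i\<le>length z. f i \<in> L \<and> \<sigma> (f i) = \<sigma> (x0 @ take i z))"
proof -
  define f where "f = rec_nat x0 (\<lambda>i v. SOME v'. v' \<in> L \<and> \<sigma> v' = \<sigma> (v @ [z ! i]))"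
  have f0: "f 0 = x0" by (simp add: f_def)
  have fS: "f (Suc i) = (SOME v'. v' \<in> L \<and> \<sigma> v' = \<sigma> (f i @ [z ! i]))" for i by (simp add: f_def)
  have "f i \<in> L \<and> \<sigma> (f i) = \<sigma> (x0 @ take i z)" if "i \<le> length z" for i
    using that
  proof (induction i)
    case 0 then show ?case using f0 x0 by simp
  next
    case (Suc i)
    then have i: "i < length z" and IH: "f i \<in> L" "\<sigma> (f i) = \<sigma> (x0 @ take i z)" by auto
    have zi: "z ! i < k" using z i by auto
    have fl: "f i @ [z ! i] \<in> lists {0..<k}" using L_lists[OF IH(1)] zi by auto
    then have "\<sigma> (f i @ [z ! i]) \<in> \<sigma> ` L" using sig_car sig_surj by auto
    then have ex: "\<exists>v'. v' \<in> L \<and> \<sigma> v' = \<sigma> (f i @ [z ! i])" by auto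
    have A: "f (Suc i) \<in> L \<and> \<sigma> (f (Suc i)) = \<sigma> (f i @ [z ! i])"
      unfolding fS by (rule someI_ex[OF ex])
    have x0l: "x0 \<in> lists {0..<k}" using L_lists x0 by auto
    have lt: "take i z \<in> lists {0..<k}" using z by (meson in_lists_conv_set in_set_takeD)
    have "\<sigma> (f i @ [z ! i]) = \<sigma> (f i) \<otimes> \<sigma> [z ! i]" using sig_app L_lists[OF IH(1)] zi by simp
    also have "\<dots> = \<sigma> (x0 @ take i z) \<otimes> \<sigma> [z ! i]" using IH by simp
    also have "\<dots> = \<sigma> (x0 @ take i z @ [z ! i])" using sig_app[of "x0 @ take i z" "[z ! i]"] x0l lt zi by simp
    also have "take i z @ [z ! i] = take (Suc i) z" using i by (simp add: take_Suc_conv_app_nth)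
    finally show ?case using A by simp
  qed
  then show ?thesis using f0 by blast
qed

lemma sig_to_chain:
  assumes z: "z \<in> lists {0..<k}"
    and g: "\<And>i. i \<le> length z \<Longrightarrow> g i \<in> L \<and> \<sigma> (g i) = \<sigma> (x0 @ take i z)" and x0: "x0 \<in> L"
  shows "chain (length z) (\<lambda>i. Na ! (z ! i)) (map g [0..<Suc (length z)])"
  unfolding chain_def
proof (intro conjI allI impI)
  show "length (map g [0..<Suc (length z)]) = Suc (length z)" by simp
  fix i assume i: "i < length z"
  have zi: "z ! i < k" using z i by auto
  have x0l: "x0 \<in> lists {0..<k}" using L_lists x0 by auto
  have lt: "take i z \<in> lists {0..<k}" using z by (meson in_lists_conv_set in_set_takeD)
  have gi: "g i \<in> L" "\<sigma> (g i) = \<sigma> (x0 @ take i z)" using g i by auto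
  have gs: "g (Suc i) \<in> L" "\<sigma> (g (Suc i)) = \<sigma> (x0 @ take (Suc i) z)" using g i by auto
  have "\<sigma> (g i @ [z ! i]) = \<sigma> (g i) \<otimes> \<sigma> [z ! i]" using sig_app L_lists[OF gi(1)] zi by simp
  also have "\<dots> = \<sigma> (x0 @ take i z) \<otimes> \<sigma> [z ! i]" using gi by simp
  also have "\<dots> = \<sigma> (x0 @ take i z @ [z ! i])" using sig_app[of "x0 @ take i z" "[z ! i]"] x0l lt zi by simp
  also have "take i z @ [z ! i] = take (Suc i) z" using i by (simp add: take_Suc_conv_app_nth)
  finally have "\<sigma> (g i @ [z ! i]) = \<sigma> (g (Suc i))" using gs by simp
  then have "pad_conv (g i) (g (Suc i)) \<in> lang (Na ! (z ! i))" using interp_a[OF zi gi(1) gs(1)] by simp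
  then show "pad_conv (map g [0..<Suc (length z)] ! i) (map g [0..<Suc (length z)] ! Suc i) \<in> lang (Na ! (z ! i))"
    using i by (simp del: upt_Suc)
qed

lemma left_chain:
  "(\<exists>t\<in>carrier M. t \<otimes> \<sigma> w = \<one>) \<longleftrightarrow> (\<exists>ys. chain (length w) (\<lambda>i. Na ! (w ! i)) ys \<and> ys ! length w = e0)"
proof
  assume "\<exists>t\<in>carrier M. t \<otimes> \<sigma> w = \<one>"
  then obtain x0 where x0: "x0 \<in> L" "\<sigma> x0 \<otimes> \<sigma> w = \<one>" using sig_surj by (metis imageE)
  obtain f where f: "f 0 = x0" "\<And>i. i \<le> length w \<Longrightarrow> f i \<in> L \<and> \<sigma> (f i) = \<sigma> (x0 @ take i w)"
    using walk[OF x0(1) wl] by blast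
  define g where "g i = (if i < length w then f i else e0)" for i
  have g: "g i \<in> L \<and> \<sigma> (g i) = \<sigma> (x0 @ take i w)" if "i \<le> length w" for i
  proof (cases "i < length w")
    case True then show ?thesis using f(2)[of i] by (simp add: g_def)
  next
    case False
    then have "i = length w" using that by simp
    moreover have "\<sigma> (x0 @ w) = \<one>" using x0 sig_app L_lists wl by simp
    ultimately show ?thesis using e0_props False by (simp add: g_def)
  qed
  have "chain (length w) (\<lambda>i. Na ! (w ! i)) (map g [0..<Suc (length w)])"
    by (rule sig_to_chain[OF wl g x0(1)])
  moreover have "map g [0..<Suc (length w)] ! length w = e0"
    by (simp add: g_def del: upt_Suc)
  ultimately show "\<exists>ys. chain (length w) (\<lambda>i. Na ! (w ! i)) ys \<and> ys ! length w = e0" by blast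
next
  assume "\<exists>ys. chain (length w) (\<lambda>i. Na ! (w ! i)) ys \<and> ys ! length w = e0"
  then obtain ys where ys: "chain (length w) (\<lambda>i. Na ! (w ! i)) ys" "ys ! length w = e0" by blast
  have allL: "\<And>i. i \<le> length w \<Longrightarrow> ys ! i \<in> L"
    using chain_L[OF ys(1) wl refl] ys(2) e0_props by auto
  have "\<sigma> (ys ! 0 @ take (length w) w) = \<sigma> (ys ! length w)"
    by (rule chain_sig[OF ys(1) wl refl allL]) auto
  then have "\<sigma> (ys ! 0) \<otimes> \<sigma> w = \<one>" using ys(2) e0_props sig_app L_lists allL[of 0] wl by simp
  then show "\<exists>t\<in>carrier M. t \<otimes> \<sigma> w = \<one>" using sig_car L_lists allL[of 0] by blast
qed

end




context valid_in
begin

lemma states_le_code: "states_le N (enc_nfa e N)"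
  unfolding states_le_def by (cases N) (auto intro: states_bound)

lemma validX_dd: "validX inp (E inp) xc \<longleftrightarrow>
   chain (length w) (\<lambda>i. Na ! (w ! i)) (map dec (dec xc)) \<and> map dec (dec xc) ! length w = e0"
  using validX_enc[of "map dec (dec xc)"] dd[of xc] by simp

lemma hasX_iff: "hasX inp (E inp) \<longleftrightarrow> (\<exists>ys. chain (length w) (\<lambda>i. Na ! (w ! i)) ys \<and> ys ! length w = e0)"
proof
  assume "hasX inp (E inp)"
  then obtain xc where "validX inp (E inp) xc" unfolding hasX_def by blast
  then show "\<exists>ys. chain (length w) (\<lambda>i. Na ! (w ! i)) ys \<and> ys ! length w = e0"
    using validX_dd by blast
next
  assume "\<exists>ys. chain (length w) (\<lambda>i. Na ! (w ! i)) ys \<and> ys ! length w = e0"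
  then obtain ys0 where ys0: "chain (length w) (\<lambda>i. Na ! (w ! i)) ys0" "ys0 ! length w = e0" by blast
  define S where "S i = enc_nfa enc_pair_letter (Na ! (w ! i))" for i
  define B where "B = length e0 + (\<Prod>i<length w. Suc (S i))"
  obtain ys where ys: "chain (length w) (\<lambda>i. Na ! (w ! i)) ys" "ys ! length w = e0"
    "\<And>i. i < Suc (length w) \<Longrightarrow> length (ys ! i) \<le> B"
    using pumping[OF ys0, of S] states_le_code unfolding S_def B_def by blast
  have len: "length ys = Suc (length w)" using ys(1) by (simp add: chain_def)
  have allL: "\<And>i. i \<le> length w \<Longrightarrow> ys ! i \<in> L"
    using chain_L[OF ys(1) wl refl] ys(2) e0_props by auto
  have "\<forall>y\<in>set ys. enc_list y \<le> lb B k"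
  proof
    fix y assume "y \<in> set ys"
    then obtain i where i: "i < Suc (length w)" "y = ys ! i" using len by (auto simp: in_set_conv_nth)
    have "y \<in> lists {0..<k}" using allL[of i] i L_lists by auto
    then show "enc_list y \<le> lb B k" using ys(3)[OF i(1)] i by (intro lb_bound) auto
  qed
  then have bnd: "enc_list (map enc_list ys) \<le> lb (Suc (length w)) (lb B k)"
    using len by (intro lb_bound) auto
  have Pb: "Pb inp = (\<Prod>i<length w. Suc (S i))"
    unfolding Pb_def S_def inp_parts(6) by (intro prod.cong) (auto simp: nthNA wk)
  have Cb: "Cb inp (E inp) = lb (Suc (length w)) (lb B k)"
    unfolding Cb_def Pb B_def by (simp add: inp_parts(1,6) E_enc del: enc_list_Cons)
  show "hasX inp (E inp)" unfolding hasX_def Cb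
    using bnd validX_enc[of ys] ys(1,2) by (intro exI[of _ "enc_list (map enc_list ys)"]) auto
qed

lemma validY_enc:
  assumes len: "length ys = Suc (length w)" and y0: "ys ! 0 = x0" and x0: "x0 \<in> L"
  shows "validY inp (E inp) (enc_list (map enc_list ys)) (enc_list (map enc_list zs)) \<longleftrightarrow>
    chain (length (w @ x0)) (\<lambda>i. Na ! ((w @ x0) ! i)) zs \<and> zs ! 0 = e0"
proof -
  have n0: "nthc (enc_list (map enc_list ys)) 0 = enc_list x0" using len y0 by (simp del: enc_list_Cons)
  have x0l: "x0 \<in> lists {0..<k}" using x0 L_lists by auto
  have zlk: "zl inp (enc_list x0) i = (w @ x0) ! i \<and> (w @ x0) ! i < k" if "i < length w + length x0" for i
    using that wl x0l by (auto simp: zl_def inp_parts(6) nth_append simp del: enc_list_Cons)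
  show ?thesis
  proof (cases "length zs = Suc (length w + length x0)")
    case True
    have m: "i < length w + length x0 \<Longrightarrow>
      memP (nthc (CNA inp) (zl inp (enc_list x0) i)) (nthc (enc_list (map enc_list zs)) i)
        (nthc (enc_list (map enc_list zs)) (Suc i)) \<longleftrightarrow>
      pad_conv (zs ! i) (zs ! Suc i) \<in> lang (Na ! ((w @ x0) ! i))" for i
      using True zlk[of i] by (simp add: memP_a del: enc_list_Cons)
    have l: "nthc (enc_list (map enc_list zs)) 0 = E inp \<longleftrightarrow> zs ! 0 = e0"
      using True by (simp add: E_enc del: enc_list_Cons)
    show ?thesis unfolding validY_def chain_def n0 using True m l
      by (simp add: inp_parts(6) del: enc_list_Cons) blast
  next
    case False
    then show ?thesis unfolding validY_def chain_def n0
      by (simp add: inp_parts(6) del: enc_list_Cons)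
  qed
qed

lemma validY_dd:
  assumes "length ys = Suc (length w)" "ys ! 0 = x0" "x0 \<in> L"
  shows "validY inp (E inp) (enc_list (map enc_list ys)) yc \<longleftrightarrow>
    chain (length (w @ x0)) (\<lambda>i. Na ! ((w @ x0) ! i)) (map dec (dec yc)) \<and> map dec (dec yc) ! 0 = e0"
  using validY_enc[OF assms, of "map dec (dec yc)"] dd[of yc] by simp

lemma unit_iff:
  assumes "s \<in> carrier M" "t \<in> carrier M" "t \<otimes> s = \<one>"
  shows "s \<in> Units M \<longleftrightarrow> s \<otimes> t = \<one>"
proof
  assume "s \<in> Units M"
  then obtain u where u: "u \<in> carrier M" "u \<otimes> s = \<one>" "s \<otimes> u = \<one>" unfolding Units_def by blast
  have "t = t \<otimes> (s \<otimes> u)" using u assms by simp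
  also have "\<dots> = (t \<otimes> s) \<otimes> u" by (rule m_assoc[symmetric]) (use u assms in auto)
  also have "\<dots> = u" using u assms by simp
  finally show "s \<otimes> t = \<one>" using u by simp
next
  assume "s \<otimes> t = \<one>"
  then show "s \<in> Units M" using assms unfolding Units_def by blast
qed

lemma not_left_not_unit: "\<not> (\<exists>t\<in>carrier M. t \<otimes> s = \<one>) \<Longrightarrow> s \<notin> Units M"
  unfolding Units_def by blast

definition "D0 = {x. (\<exists>u. Epred x u) \<and> (\<exists>c. Cpred (pe x (E x)) c)}"

lemma Cpred_inp: "Cpred (pe inp (E inp)) c \<longleftrightarrow>
   (hasX inp (E inp) \<longrightarrow> validX inp (E inp) (p1 c) \<and> validY inp (E inp) (p1 c) (p2 c))"
  by (simp add: Cpred_def)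

lemma Cpred_ex: "\<exists>c. Cpred (pe inp (E inp)) c"
proof (cases "hasX inp (E inp)")
  case False then show ?thesis by (simp add: Cpred_inp)
next
  case True
  then obtain ys where ys: "chain (length w) (\<lambda>i. Na ! (w ! i)) ys" "ys ! length w = e0"
    using hasX_iff by blast
  have len: "length ys = Suc (length w)" using ys(1) by (simp add: chain_def)
  have x0: "ys ! 0 \<in> L" using chain_L[OF ys(1) wl refl] ys(2) e0_props by auto
  have z: "w @ ys ! 0 \<in> lists {0..<k}" using wl x0 L_lists by auto
  obtain f where f: "f 0 = e0" "\<And>i. i \<le> length (w @ ys ! 0) \<Longrightarrow> f i \<in> L \<and> \<sigma> (f i) = \<sigma> (e0 @ take i (w @ ys ! 0))"
    using walk[OF e0_props(1) z] by blast
  have ch: "chain (length (w @ ys ! 0)) (\<lambda>i. Na ! ((w @ ys ! 0) ! i)) (map f [0..<Suc (length (w @ ys ! 0))])"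
    by (rule sig_to_chain[OF z f(2) e0_props(1)])
  have "map f [0..<Suc (length (w @ ys ! 0))] ! 0 = e0" using f(1) by (simp del: upt_Suc)
  then have "validY inp (E inp) (enc_list (map enc_list ys)) (enc_list (map enc_list (map f [0..<Suc (length (w @ ys ! 0))])))"
    using validY_enc[OF len refl x0] ch by blast
  moreover have "validX inp (E inp) (enc_list (map enc_list ys))" using validX_enc ys by blast
  ultimately show ?thesis unfolding Cpred_inp
    by (intro exI[of _ "pe (enc_list (map enc_list ys)) (enc_list (map enc_list (map f [0..<Suc (length (w @ ys ! 0))])))"]) simp
qed

lemma inp_D0: "inp \<in> D0"
  unfolding D0_def using Epred_ex Cpred_ex by blast

lemma alg_inp: "alg inp = (if \<sigma> w \<in> Units M then 1 else 0)"
proof -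
  define c where "c = Cst (pe inp (E inp))"
  have Cc: "Cpred (pe inp (E inp)) c" unfolding c_def Cst_def using Cpred_ex by (rule LeastI_ex)
  have alg: "alg inp = of_bool (hasX inp (E inp) \<and> memP (CEQ inp) (nthc (p2 c) (lenc (p2 c) - 1)) (E inp))"
    unfolding alg_def Fin_def c_def by simp
  have sw: "\<sigma> w \<in> carrier M" using sig_car wl by simp
  show ?thesis
  proof (cases "hasX inp (E inp)")
    case False
    then have "\<not> (\<exists>t\<in>carrier M. t \<otimes> \<sigma> w = \<one>)" using hasX_iff left_chain by blast
    then show ?thesis using alg False not_left_not_unit by simp
  next
    case True
    then have vX: "validX inp (E inp) (p1 c)" and vY: "validY inp (E inp) (p1 c) (p2 c)"
      using Cc Cpred_inp by auto
    define ys where "ys = map dec (dec (p1 c))"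
    have ys: "chain (length w) (\<lambda>i. Na ! (w ! i)) ys" "ys ! length w = e0"
      using vX validX_dd unfolding ys_def by auto
    have len: "length ys = Suc (length w)" using ys(1) by (simp add: chain_def)
    have allL: "\<And>i. i \<le> length w \<Longrightarrow> ys ! i \<in> L"
      using chain_L[OF ys(1) wl refl] ys(2) e0_props by auto
    define x0 where "x0 = ys ! 0"
    have x0: "x0 \<in> L" using allL[of 0] by (simp add: x0_def)
    have x0l: "x0 \<in> lists {0..<k}" using x0 L_lists by auto
    have "\<sigma> (ys ! 0 @ take (length w) w) = \<sigma> (ys ! length w)"
      by (rule chain_sig[OF ys(1) wl refl allL]) auto
    then have left: "\<sigma> x0 \<otimes> \<sigma> w = \<one>" using ys(2) e0_props sig_app x0l wl by (simp add: x0_def)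
    have p1c: "p1 c = enc_list (map enc_list ys)" unfolding ys_def by (simp add: comp_def)
    define zs where "zs = map dec (dec (p2 c))"
    define z where "z = w @ x0"
    have z: "z \<in> lists {0..<k}" using wl x0l by (simp add: z_def)
    have zs: "chain (length z) (\<lambda>i. Na ! (z ! i)) zs" "zs ! 0 = e0"
      using vY validY_dd[OF len x0_def[symmetric] x0] unfolding p1c zs_def z_def by auto
    have lenz: "length zs = Suc (length z)" using zs(1) by (simp add: chain_def)
    have allZ: "\<And>i. i \<le> length z \<Longrightarrow> zs ! i \<in> L"
      using chain_L[OF zs(1) z refl] zs(2) e0_props by auto
    have "\<sigma> (zs ! 0 @ take (length z) z) = \<sigma> (zs ! length z)"
      by (rule chain_sig[OF zs(1) z refl allZ]) auto
    then have sz: "\<sigma> (zs ! length z) = \<sigma> w \<otimes> \<sigma> x0"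
      using zs(2) e0_props sig_app z x0l wl L_lists[OF e0_props(1)] sig_car by (simp add: z_def)
    have p2c: "p2 c = enc_list (map enc_list zs)" unfolding zs_def by (simp add: comp_def)
    have "nthc (p2 c) (lenc (p2 c) - 1) = enc_list (zs ! length z)"
      unfolding p2c using lenz by (simp del: enc_list_Cons)
    then have "memP (CEQ inp) (nthc (p2 c) (lenc (p2 c) - 1)) (E inp) \<longleftrightarrow> \<sigma> (zs ! length z) = \<sigma> e0"
      by (simp add: inp_parts(3) E_enc memP_correct interp_eq allZ e0_props(1) del: enc_list_Cons)
    then have "alg inp = of_bool (\<sigma> w \<otimes> \<sigma> x0 = \<one>)" using alg True sz e0_props by simp
    also have "(\<sigma> w \<otimes> \<sigma> x0 = \<one>) = (\<sigma> w \<in> Units M)"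
      using unit_iff[OF sw sig_car[OF x0l] left] by simp
    finally show ?thesis by simp
  qed
qed

end




theorem proposition4p5:
  shows "\<exists>alg :: recf.
    \<forall>k NL Neq Na io w (M :: nat monoid) \<sigma>.
      monoid M \<and>
      pre_automatic k NL Neq Na \<and>
      is_interpretation k NL Neq Na M \<sigma> \<and>
      consistent_with k NL io \<sigma> \<and>
      w \<in> lists {0..<k}
      \<longrightarrow> rec_eval alg [enc_input k NL Neq Na io w] (if \<sigma> w \<in> Units M then 1 else 0)"
proof -
  obtain c where c: "\<forall>x\<in>{x. (\<exists>u. Epred x u) \<and> (\<exists>c. Cpred (pe x (E x)) c)}. rec_eval c [x] (alg x)"
    using alg_computable unfolding compD_def by blast
  show ?thesis
  proof (intro exI[of _ c] allI impI)
    fix k NL Neq Na io w and M :: "nat monoid" and \<sigma>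
    assume a: "monoid M \<and> pre_automatic k NL Neq Na \<and> is_interpretation k NL Neq Na M \<sigma> \<and>
      consistent_with k NL io \<sigma> \<and> w \<in> lists {0..<k}"
    then have V: "valid_in M k NL Neq Na io w \<sigma>"
      by (intro valid_in.intro valid_in_axioms.intro) auto
    have "rec_eval c [valid_in.inp k NL Neq Na io w] (alg (valid_in.inp k NL Neq Na io w))"
      using c valid_in.Epred_ex[OF V] valid_in.Cpred_ex[OF V] by blast
    then show "rec_eval c [enc_input k NL Neq Na io w] (if \<sigma> w \<in> Units M then 1 else 0)"
      using valid_in.alg_inp[OF V] valid_in.inp_def[OF V] by simp
  qed
qed



end
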